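(* Assume Assumption A1(2) and Assumption A2 (see context), and let $0<\eta_s\le\eta_{\infty,2}$ for all $s\ge0$. Then for every $t\ge1$, \[\mathbb E\big[\|\tilde\theta^{(\mathrm{fl})}_t\|^2\big]\le\sum_{s=1}^t\exp\Big(-2a\sum_{i=s+1}^t\eta_iH_i\Big)\Big(H_s\eta_s^2\wedge\frac{\eta_s}{a}\Big)\frac{\bar\sigma_\varepsilon^2}{N},\qquad\tilde\theta^{(\mathrm{fl})}_t=\sum_{s=1}^t\prod_{i=s+1}^t\Gamma^{\mathrm{avg}}_i\,\varphi^{\mathrm{avg}}_s.\]
   Context: Setting: $N$ agents, dimension $d$. For each agent $c$: distribution $\pi_c$ on $(\mathsf Z,\mathcal Z)$, measurable $\mathbf A^c,\mathbf b^c$, $\bar{\mathbf A}^c=\mathbb E_{\pi_c}[\mathbf A^c(Z)]$, $\bar{\mathbf b}^c=\mathbb E_{\pi_c}[\mathbf b^c(Z)]$; $\bar{\mathbf A}^c\theta^c_\star=\bar{\mathbf b}^c$; $\varepsilon^c(z)=(\mathbf A^c(z)-\bar{\mathbf A}^c)\theta^c_\star-(\mathbf b^c(z)-\bar{\mathbf b}^c)$; $\Sigma^c_\varepsilon=\mathbb E_{\pi_c}[\varepsilon^c(Z)\varepsilon^c(Z)^\top]$, $\bar\sigma^2_\varepsilon=N^{-1}\sum_c\mathrm{Tr}(\Sigma^c_\varepsilon)$. Assumption A1(p): each $-\bar{\mathbf A}^c$ Hurwitz; there exist $a>0,\eta_{\infty,p}>0$, $\eta_{\infty,p}a\le1/2$,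 with $\mathbb E^{1/p}_{Z\sim\pi_c}[\|(I-\eta\mathbf A^c(Z))u\|^p]\le(1-\eta a)\|u\|$ for all $0<\eta<\eta_{\infty,p}$, $u$. Assumption A2: samples $Z^c_{s,h}$ ($1\le h\le H_s$) independent with $Z^c_{s,h}\sim\pi_c$; $\max_c\sup_z\|\varepsilon^c(z)\|<\infty$, $\max_c\sup_z\max(\|\mathbf A^c(z)\|,\|\mathbf A^c(z)-\bar{\mathbf A}^c\|)<\infty$. $H_s\in\mathbb N$ are local step numbers. $\Gamma^c_{s,l:r}=(I-\eta_s\mathbf A^c(Z^c_{s,r}))\cdots(I-\eta_s\mathbf A^c(Z^c_{s,l}))$ ($I$ if $l>r$), $\Gamma^{\mathrm{avg}}_s=N^{-1}\sum_c\Gamma^c_{s,1:H_s}$, $\prod_{i=s+1}^t\Gamma^{\mathrm{avg}}_i=\Gamma^{\mathrm{avg}}_t\cdots\Gamma^{\mathrm{avg}}_{s+1}$; $\varphi^{\mathrm{avg}}_s=-N^{-1}\sum_c\sum_{h=1}^{H_s}\eta_s\Gamma^c_{s,h+1:H_s}\varepsilon^c(Z^c_{s,h})$. *)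

theory Defs
  imports "HOL-Probability.Probability"
begin

text \<open>Matrices are real^'d^'d, vectors real^'d (Euclidean norm). Agents are indexed by c < N.\<close>

definition mtrace :: "real^'d^'d \<Rightarrow> real" where
  "mtrace M = (\<Sum>i\<in>UNIV. M $ i $ i)"

definition outer :: "real^'d \<Rightarrow> real^'d^'d" where
  "outer v = (\<chi> i j. v $ i * v $ j)"

definition hurwitz :: "real^'d^'d \<Rightarrow> bool" where
  "hurwitz M \<longleftrightarrow> (\<forall>(lam::complex) (v::complex^'d). v \<noteq> 0 \<and>
      (\<chi> i j. complex_of_real (M $ i $ j)) *v v = lam *s v \<longrightarrow> Re lam < 0)"

definition Abar :: "(nat \<Rightarrow> 'z measure) \<Rightarrow> (nat \<Rightarrow> 'z \<Rightarrow> real^'d^'d) \<Rightarrow> nat \<Rightarrow> real^'d^'d" where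
  "Abar \<pi> A c = integral\<^sup>L (\<pi> c) (A c)"

definition bbar :: "(nat \<Rightarrow> 'z measure) \<Rightarrow> (nat \<Rightarrow> 'z \<Rightarrow> real^'d) \<Rightarrow> nat \<Rightarrow> real^'d" where
  "bbar \<pi> b c = integral\<^sup>L (\<pi> c) (b c)"

definition eps :: "(nat \<Rightarrow> 'z measure) \<Rightarrow> (nat \<Rightarrow> 'z \<Rightarrow> real^'d^'d) \<Rightarrow> (nat \<Rightarrow> 'z \<Rightarrow> real^'d)
    \<Rightarrow> (nat \<Rightarrow> real^'d) \<Rightarrow> nat \<Rightarrow> 'z \<Rightarrow> real^'d" where
  "eps \<pi> A b \<theta>s c z = (A c z - Abar \<pi> A c) *v \<theta>s c - (b c z - bbar \<pi> b c)"

definition Sigma_eps where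
  "Sigma_eps \<pi> A b \<theta>s c = integral\<^sup>L (\<pi> c) (\<lambda>z. outer (eps \<pi> A b \<theta>s c z))"

definition sigma_bar_sq where
  "sigma_bar_sq N \<pi> A b \<theta>s = (1 / real N) * (\<Sum>c<N. mtrace (Sigma_eps \<pi> A b \<theta>s c))"

text \<open>Ordered product F r ** ... ** F l, identity if l > r.\<close>
definition lprod :: "(nat \<Rightarrow> real^'d^'d) \<Rightarrow> nat \<Rightarrow> nat \<Rightarrow> real^'d^'d" where
  "lprod F l r = fold (\<lambda>i acc. F i ** acc) [l..<Suc r] (mat 1)"

definition Gam :: "(nat \<Rightarrow> 'z \<Rightarrow> real^'d^'d) \<Rightarrow> (nat \<Rightarrow> nat \<Rightarrow> nat \<Rightarrow> 'z) \<Rightarrow> (nat \<Rightarrow> real)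
    \<Rightarrow> nat \<Rightarrow> nat \<Rightarrow> nat \<Rightarrow> nat \<Rightarrow> real^'d^'d" where
  "Gam A Z \<eta> c s l r = lprod (\<lambda>h. mat 1 - \<eta> s *\<^sub>R A c (Z c s h)) l r"

definition Gavg where
  "Gavg N A Z \<eta> H s = (1 / real N) *\<^sub>R (\<Sum>c<N. Gam A Z \<eta> c s 1 (H s))"

definition phiavg where
  "phiavg N \<pi> A b \<theta>s Z \<eta> H s = - ((1 / real N) *\<^sub>R
     (\<Sum>c<N. \<Sum>h=1..H s. \<eta> s *\<^sub>R (Gam A Z \<eta> c s (h+1) (H s) *v eps \<pi> A b \<theta>s c (Z c s h))))"

definition theta_fl where
  "theta_fl N \<pi> A b \<theta>s Z \<eta> H t =
     (\<Sum>s=1..t. lprod (Gavg N A Z \<eta> H) (s+1) t *v phiavg N \<pi> A b \<theta>s Z \<eta> H s)"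

end

theory Submission
  imports Defs
begin

locale fl = prob_space M
  for M :: "'w measure" +
  fixes N :: nat and S :: "'z measure" and Zs :: "nat \<Rightarrow> nat \<Rightarrow> nat \<Rightarrow> 'w \<Rightarrow> 'z" and H :: "nat \<Rightarrow> nat"
  assumes Zs_indep: "indep_vars (\<lambda>_. S) (\<lambda>(c, s, h). Zs c s h)
                     {(c, s, h). c < N \<and> 1 \<le> s \<and> 1 \<le> h \<and> h \<le> H s}"
begin

definition "Idx = {(c, s, h). c < N \<and> 1 \<le> s \<and> 1 \<le> h \<and> h \<le> H s}"
definition "ZZ = (\<lambda>(c, s, h). Zs c s h)"

definition dep :: "(nat\<times>nat\<times>nat) set \<Rightarrow> ('w \<Rightarrow> real) \<Rightarrow> bool" where
  "dep J f \<longleftrightarrow> J \<subseteq> Idx \<and> (\<exists>g\<in>borel_measurable (PiM J (\<lambda>_. S)).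
      (\<exists>K. \<forall>x\<in>space (PiM J (\<lambda>_. S)). \<bar>g x\<bar> \<le> K) \<and> (\<forall>\<omega>\<in>space M. f \<omega> = g (\<lambda>i\<in>J. ZZ i \<omega>)))"

lemma ZZ_indep: "indep_vars (\<lambda>_. S) ZZ Idx"
  using Zs_indep unfolding Idx_def ZZ_def .

lemma ZZ_meas: "i \<in> Idx \<Longrightarrow> ZZ i \<in> measurable M S"
  using Zs_indep unfolding indep_vars_def Idx_def ZZ_def by auto

lemma restr_meas: "J \<subseteq> Idx \<Longrightarrow> (\<lambda>\<omega>. \<lambda>i\<in>J. ZZ i \<omega>) \<in> measurable M (PiM J (\<lambda>_. S))"
  by (intro measurable_restrict ZZ_meas) auto

lemma dep_meas: assumes "dep J f" shows "f \<in> borel_measurable M"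
proof -
  obtain g where g: "g \<in> borel_measurable (PiM J (\<lambda>_. S))" "\<forall>\<omega>\<in>space M. f \<omega> = g (\<lambda>i\<in>J. ZZ i \<omega>)"
    and J: "J \<subseteq> Idx" using assms unfolding dep_def by blast
  have "(\<lambda>\<omega>. g (\<lambda>i\<in>J. ZZ i \<omega>)) \<in> borel_measurable M"
    using measurable_comp[OF restr_meas[OF J] g(1)] by (simp add: comp_def)
  then show ?thesis by (subst measurable_cong[where g="\<lambda>\<omega>. g (\<lambda>i\<in>J. ZZ i \<omega>)"]) (use g(2) in auto)
qed

lemma dep_bdd: assumes "dep J f" shows "\<exists>K. \<forall>\<omega>\<in>space M. \<bar>f \<omega>\<bar> \<le> K"
proof -
  obtain g K where g: "\<forall>x\<in>space (PiM J (\<lambda>_. S)). \<bar>g x\<bar> \<le> K" "\<forall>\<omega>\<in>space M. f \<omega> = g (\<lambda>i\<in>J. ZZ i \<omega>)"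
    and J: "J \<subseteq> Idx" using assms unfolding dep_def by blast
  have "\<forall>\<omega>\<in>space M. \<bar>f \<omega>\<bar> \<le> K"
  proof
    fix \<omega> assume w: "\<omega> \<in> space M"
    have "(\<lambda>i\<in>J. ZZ i \<omega>) \<in> space (PiM J (\<lambda>_. S))"
      using measurable_space[OF restr_meas[OF J] w] .
    then show "\<bar>f \<omega>\<bar> \<le> K" using g w by simp
  qed
  then show ?thesis by blast
qed

lemma dep_int: assumes "dep J f" shows "integrable M f"
proof -
  obtain K where K: "\<forall>\<omega>\<in>space M. \<bar>f \<omega>\<bar> \<le> K" using dep_bdd[OF assms] by blast
  show ?thesis
    by (rule integrable_const_bound[where B=K]) (use K dep_meas[OF assms] in auto)
qed

lemma dep_indep:
  assumes f: "dep J1 f" and g: "dep J2 g" and disj: "J1 \<inter> J2 = {}"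
  shows "expectation (\<lambda>\<omega>. f \<omega> * g \<omega>) = expectation f * expectation g"
proof -
  obtain f' where f': "f' \<in> borel_measurable (PiM J1 (\<lambda>_. S))" "\<forall>\<omega>\<in>space M. f \<omega> = f' (\<lambda>i\<in>J1. ZZ i \<omega>)"
    and J1: "J1 \<subseteq> Idx" using f unfolding dep_def by blast
  obtain g' where g': "g' \<in> borel_measurable (PiM J2 (\<lambda>_. S))" "\<forall>\<omega>\<in>space M. g \<omega> = g' (\<lambda>i\<in>J2. ZZ i \<omega>)"
    and J2: "J2 \<subseteq> Idx" using g unfolding dep_def by blast
  have iv: "indep_var (PiM J1 (\<lambda>_. S)) (\<lambda>\<omega>. \<lambda>i\<in>J1. ZZ i \<omega>) (PiM J2 (\<lambda>_. S)) (\<lambda>\<omega>. \<lambda>i\<in>J2. ZZ i \<omega>)"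
    using indep_var_restrict[OF ZZ_indep disj J1 J2] .
  have iv2: "indep_var borel (f' \<circ> (\<lambda>\<omega>. \<lambda>i\<in>J1. ZZ i \<omega>)) borel (g' \<circ> (\<lambda>\<omega>. \<lambda>i\<in>J2. ZZ i \<omega>))"
    by (rule indep_var_compose[OF iv f'(1) g'(1)])
  have i1: "integrable M (f' \<circ> (\<lambda>\<omega>. \<lambda>i\<in>J1. ZZ i \<omega>))"
    by (rule Bochner_Integration.integrable_cong[THEN iffD2, OF refl _ dep_int[OF f]]) (use f'(2) in auto)
  have i2: "integrable M (g' \<circ> (\<lambda>\<omega>. \<lambda>i\<in>J2. ZZ i \<omega>))"
    by (rule Bochner_Integration.integrable_cong[THEN iffD2, OF refl _ dep_int[OF g]]) (use g'(2) in auto)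
  have "expectation (\<lambda>\<omega>. f \<omega> * g \<omega>) = expectation (\<lambda>\<omega>. (f' \<circ> (\<lambda>\<omega>. \<lambda>i\<in>J1. ZZ i \<omega>)) \<omega> * (g' \<circ> (\<lambda>\<omega>. \<lambda>i\<in>J2. ZZ i \<omega>)) \<omega>)"
    using f'(2) g'(2) by (intro Bochner_Integration.integral_cong) auto
  also have "\<dots> = expectation (f' \<circ> (\<lambda>\<omega>. \<lambda>i\<in>J1. ZZ i \<omega>)) * expectation (g' \<circ> (\<lambda>\<omega>. \<lambda>i\<in>J2. ZZ i \<omega>))"
    by (rule indep_var_lebesgue_integral[OF iv2 i1 i2])
  also have "\<dots> = expectation f * expectation g"
    using f'(2) g'(2) by (intro arg_cong2[where f="(*)"] Bochner_Integration.integral_cong) auto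
  finally show ?thesis .
qed

lemma dep_mono: assumes "dep J f" "J \<subseteq> J'" "J' \<subseteq> Idx" shows "dep J' f"
proof -
  obtain g K where g: "g \<in> borel_measurable (PiM J (\<lambda>_. S))" "\<forall>x\<in>space (PiM J (\<lambda>_. S)). \<bar>g x\<bar> \<le> K"
     "\<forall>\<omega>\<in>space M. f \<omega> = g (\<lambda>i\<in>J. ZZ i \<omega>)"
    using assms(1) unfolding dep_def by blast
  have m: "(\<lambda>x. g (restrict x J)) \<in> borel_measurable (PiM J' (\<lambda>_. S))"
    using measurable_comp[OF measurable_restrict_subset[OF assms(2)] g(1)] by (simp add: comp_def)
  have b: "\<forall>x\<in>space (PiM J' (\<lambda>_. S)). \<bar>g (restrict x J)\<bar> \<le> K"
  proof
    fix x assume "x \<in> space (PiM J' (\<lambda>_. S))"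
    then have "restrict x J \<in> space (PiM J (\<lambda>_. S))"
      using measurable_space[OF measurable_restrict_subset[OF assms(2)]] by blast
    then show "\<bar>g (restrict x J)\<bar> \<le> K" using g(2) by blast
  qed
  have e: "\<forall>\<omega>\<in>space M. f \<omega> = g (restrict (\<lambda>i\<in>J'. ZZ i \<omega>) J)"
    using g(3) assms(2) by (simp add: restrict_restrict Int_absorb1)
  show ?thesis unfolding dep_def using assms(3) m b e
    by (intro conjI bexI[where x="\<lambda>x. g (restrict x J)"] exI[where x=K]) auto
qed

lemma dep_const: assumes "J \<subseteq> Idx" shows "dep J (\<lambda>_. c)"
  unfolding dep_def using assms by (intro conjI bexI[where x="\<lambda>_. c"]) auto

lemma dep_add: assumes "dep J f" "dep J g" shows "dep J (\<lambda>\<omega>. f \<omega> + g \<omega>)"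
proof -
  obtain f' K1 where f: "f' \<in> borel_measurable (PiM J (\<lambda>_. S))" "\<forall>x\<in>space (PiM J (\<lambda>_. S)). \<bar>f' x\<bar> \<le> K1"
     "\<forall>\<omega>\<in>space M. f \<omega> = f' (\<lambda>i\<in>J. ZZ i \<omega>)" and J: "J \<subseteq> Idx"
    using assms(1) unfolding dep_def by blast
  obtain g' K2 where g: "g' \<in> borel_measurable (PiM J (\<lambda>_. S))" "\<forall>x\<in>space (PiM J (\<lambda>_. S)). \<bar>g' x\<bar> \<le> K2"
     "\<forall>\<omega>\<in>space M. g \<omega> = g' (\<lambda>i\<in>J. ZZ i \<omega>)"
    using assms(2) unfolding dep_def by blast
  have "\<forall>x\<in>space (PiM J (\<lambda>_. S)). \<bar>f' x + g' x\<bar> \<le> K1 + K2"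
    using f(2) g(2) by (auto intro: order.trans[OF abs_triangle_ineq] add_mono)
  then show ?thesis unfolding dep_def using J f(1,3) g(1,3)
    by (intro conjI bexI[where x="\<lambda>x. f' x + g' x"]) auto
qed

lemma dep_mult: assumes "dep J f" "dep J g" shows "dep J (\<lambda>\<omega>. f \<omega> * g \<omega>)"
proof -
  obtain f' K1 where f: "f' \<in> borel_measurable (PiM J (\<lambda>_. S))" "\<forall>x\<in>space (PiM J (\<lambda>_. S)). \<bar>f' x\<bar> \<le> K1"
     "\<forall>\<omega>\<in>space M. f \<omega> = f' (\<lambda>i\<in>J. ZZ i \<omega>)" and J: "J \<subseteq> Idx"
    using assms(1) unfolding dep_def by blast
  obtain g' K2 where g: "g' \<in> borel_measurable (PiM J (\<lambda>_. S))" "\<forall>x\<in>space (PiM J (\<lambda>_. S)). \<bar>g' x\<bar> \<le> K2"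
     "\<forall>\<omega>\<in>space M. g \<omega> = g' (\<lambda>i\<in>J. ZZ i \<omega>)"
    using assms(2) unfolding dep_def by blast
  have "\<forall>x\<in>space (PiM J (\<lambda>_. S)). \<bar>f' x * g' x\<bar> \<le> max K1 0 * max K2 0"
  proof
    fix x assume x: "x \<in> space (PiM J (\<lambda>_. S))"
    have "\<bar>f' x\<bar> \<le> max K1 0" "\<bar>g' x\<bar> \<le> max K2 0" using f(2) g(2) x by force+
    then show "\<bar>f' x * g' x\<bar> \<le> max K1 0 * max K2 0" by (simp add: abs_mult mult_mono)
  qed
  then show ?thesis unfolding dep_def using J f(1,3) g(1,3)
    by (intro conjI bexI[where x="\<lambda>x. f' x * g' x"] exI[where x="max K1 0 * max K2 0"]) auto
qed

lemma dep_cmult: "J \<subseteq> Idx \<Longrightarrow> dep J f \<Longrightarrow> dep J (\<lambda>\<omega>. c * f \<omega>)"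
  using dep_mult[OF dep_const] by blast

lemma dep_neg: "J \<subseteq> Idx \<Longrightarrow> dep J f \<Longrightarrow> dep J (\<lambda>\<omega>. - f \<omega>)"
  using dep_cmult[of J f "-1"] by simp

lemma dep_diff: "J \<subseteq> Idx \<Longrightarrow> dep J f \<Longrightarrow> dep J g \<Longrightarrow> dep J (\<lambda>\<omega>. f \<omega> - g \<omega>)"
  using dep_add[OF _ dep_neg, of J f g] by simp

lemma dep_sum: assumes "finite T" "J \<subseteq> Idx" "\<And>x. x \<in> T \<Longrightarrow> dep J (f x)"
  shows "dep J (\<lambda>\<omega>. \<Sum>x\<in>T. f x \<omega>)"
  using assms by (induction T rule: finite_induct) (auto intro: dep_const dep_add)

lemma dep_single: assumes "k \<in> J" "J \<subseteq> Idx" "F \<in> borel_measurable S" "\<And>z. z \<in> space S \<Longrightarrow> \<bar>F z\<bar> \<le> K"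
  shows "dep J (\<lambda>\<omega>. F (ZZ k \<omega>))"
proof -
  have m: "(\<lambda>x. F (x k)) \<in> borel_measurable (PiM J (\<lambda>_. S))"
    using measurable_comp[OF measurable_component_singleton[OF assms(1)] assms(3)] by (simp add: comp_def)
  have b: "\<forall>x\<in>space (PiM J (\<lambda>_. S)). \<bar>F (x k)\<bar> \<le> K"
    using assms(1,4) by (auto simp: space_PiM PiE_iff)
  show ?thesis unfolding dep_def using assms(1,2) m b
    by (intro conjI bexI[where x="\<lambda>x. F (x k)"]) auto
qed

definition "depv J X \<longleftrightarrow> (\<forall>i. dep J (\<lambda>\<omega>. X \<omega> $ i))"
definition "depm J X \<longleftrightarrow> (\<forall>i j. dep J (\<lambda>\<omega>. X \<omega> $ i $ j))"

lemma dep_Idx: "dep J f \<Longrightarrow> J \<subseteq> Idx" unfolding dep_def by blast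

lemma depv_Idx: "depv J X \<Longrightarrow> J \<subseteq> Idx" unfolding depv_def using dep_Idx by blast
lemma depm_Idx: "depm J X \<Longrightarrow> J \<subseteq> Idx" unfolding depm_def using dep_Idx by blast

lemma depv_mono: "depv J X \<Longrightarrow> J \<subseteq> J' \<Longrightarrow> J' \<subseteq> Idx \<Longrightarrow> depv J' X"
  unfolding depv_def using dep_mono by blast
lemma depm_mono: "depm J X \<Longrightarrow> J \<subseteq> J' \<Longrightarrow> J' \<subseteq> Idx \<Longrightarrow> depm J' X"
  unfolding depm_def using dep_mono by blast

lemma depv_const: "J \<subseteq> Idx \<Longrightarrow> depv J (\<lambda>_. v)"
  unfolding depv_def by (simp add: dep_const)
lemma depm_const: "J \<subseteq> Idx \<Longrightarrow> depm J (\<lambda>_. v)"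
  unfolding depm_def by (simp add: dep_const)

lemma depv_add: "depv J X \<Longrightarrow> depv J Y \<Longrightarrow> depv J (\<lambda>\<omega>. X \<omega> + Y \<omega>)"
  unfolding depv_def by (simp add: dep_add)
lemma depm_add: "depm J X \<Longrightarrow> depm J Y \<Longrightarrow> depm J (\<lambda>\<omega>. X \<omega> + Y \<omega>)"
  unfolding depm_def by (simp add: dep_add)
lemma depv_diff: assumes "depv J X" "depv J Y" shows "depv J (\<lambda>\<omega>. X \<omega> - Y \<omega>)"
  using assms depv_Idx[OF assms(1)] unfolding depv_def by (simp add: dep_diff)
lemma depm_diff: assumes "depm J X" "depm J Y" shows "depm J (\<lambda>\<omega>. X \<omega> - Y \<omega>)"
  using assms depm_Idx[OF assms(1)] unfolding depm_def by (simp add: dep_diff)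
lemma depv_scaleR: assumes "depv J X" shows "depv J (\<lambda>\<omega>. c *\<^sub>R X \<omega>)"
  using assms depv_Idx[OF assms(1)] unfolding depv_def by (simp add: dep_cmult)
lemma depm_scaleR: assumes "depm J X" shows "depm J (\<lambda>\<omega>. c *\<^sub>R X \<omega>)"
  using assms depm_Idx[OF assms(1)] unfolding depm_def by (simp add: dep_cmult)
lemma depv_neg: assumes "depv J X" shows "depv J (\<lambda>\<omega>. - X \<omega>)"
  using assms depv_Idx[OF assms(1)] unfolding depv_def by (simp add: dep_neg)

lemma depv_sum: assumes "finite T" "J \<subseteq> Idx" "\<And>x. x \<in> T \<Longrightarrow> depv J (f x)"
  shows "depv J (\<lambda>\<omega>. \<Sum>x\<in>T. f x \<omega>)"
  using assms by (induction T rule: finite_induct) (auto intro: depv_const depv_add)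
lemma depm_sum: assumes "finite T" "J \<subseteq> Idx" "\<And>x. x \<in> T \<Longrightarrow> depm J (f x)"
  shows "depm J (\<lambda>\<omega>. \<Sum>x\<in>T. f x \<omega>)"
  using assms by (induction T rule: finite_induct) (auto intro: depm_const depm_add)

lemma depv_mv: assumes "depm J P" "depv J X" shows "depv J (\<lambda>\<omega>. P \<omega> *v X \<omega>)"
  unfolding depv_def
proof
  fix i
  have "dep J (\<lambda>\<omega>. \<Sum>j\<in>UNIV. P \<omega> $ i $ j * X \<omega> $ j)"
    using assms depm_Idx[OF assms(1)] unfolding depm_def depv_def by (intro dep_sum dep_mult) auto
  then show "dep J (\<lambda>\<omega>. (P \<omega> *v X \<omega>) $ i)" by (simp add: matrix_vector_mult_def)
qed

lemma depm_mm: assumes "depm J P" "depm J Q" shows "depm J (\<lambda>\<omega>. P \<omega> ** Q \<omega>)"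
  unfolding depm_def
proof (intro allI)
  fix i j
  have "dep J (\<lambda>\<omega>. \<Sum>k\<in>UNIV. P \<omega> $ i $ k * Q \<omega> $ k $ j)"
    using assms depm_Idx[OF assms(1)] unfolding depm_def by (intro dep_sum dep_mult) auto
  then show "dep J (\<lambda>\<omega>. (P \<omega> ** Q \<omega>) $ i $ j)" by (simp add: matrix_matrix_mult_def)
qed

lemma normsq_vec: "(norm (x::real^'n))\<^sup>2 = (\<Sum>i\<in>UNIV. (x $ i)\<^sup>2)"
  unfolding norm_vec_def L2_set_def by (simp add: sum_nonneg)

lemma inner_vec_real: "(x::real^'n) \<bullet> y = (\<Sum>i\<in>UNIV. x $ i * y $ i)"
  by (simp add: inner_vec_def)

lemma dep_normsq: assumes "depv J X" shows "dep J (\<lambda>\<omega>. (norm (X \<omega>))\<^sup>2)"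
proof -
  have "dep J (\<lambda>\<omega>. \<Sum>i\<in>UNIV. X \<omega> $ i * X \<omega> $ i)"
    using assms depv_Idx[OF assms] unfolding depv_def by (intro dep_sum dep_mult) auto
  then show ?thesis unfolding normsq_vec by (simp add: power2_eq_square)
qed

lemma dep_inner: assumes "depv J X" "depv J Y" shows "dep J (\<lambda>\<omega>. X \<omega> \<bullet> Y \<omega>)"
proof -
  have "dep J (\<lambda>\<omega>. \<Sum>i\<in>UNIV. X \<omega> $ i * Y \<omega> $ i)"
    using assms depv_Idx[OF assms(1)] unfolding depv_def by (intro dep_sum dep_mult) auto
  then show ?thesis by (simp add: inner_vec_real)
qed

lemma dep_int_mult: assumes "dep J1 f" "dep J2 g" shows "integrable M (\<lambda>\<omega>. f \<omega> * g \<omega>)"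
proof -
  have "J1 \<union> J2 \<subseteq> Idx" using dep_Idx assms by blast
  then have "dep (J1 \<union> J2) f" "dep (J1 \<union> J2) g" using assms by (auto intro: dep_mono)
  then show ?thesis by (intro dep_int dep_mult)
qed

lemma E_cross:
  assumes X: "depv J X" and X0: "\<And>i. expectation (\<lambda>\<omega>. X \<omega> $ i) = 0"
    and P: "depm J' P" and V: "depv J' V" and disj: "J \<inter> J' = {}"
  shows "expectation (\<lambda>\<omega>. (P \<omega> *v X \<omega>) \<bullet> V \<omega>) = 0"
proof -
  have eq: "(P \<omega> *v X \<omega>) \<bullet> V \<omega> = (\<Sum>i\<in>UNIV. \<Sum>j\<in>UNIV. (P \<omega> $ i $ j * V \<omega> $ i) * X \<omega> $ j)" for \<omega>
    by (simp add: inner_vec_real matrix_vector_mult_def sum_distrib_left mult_ac)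
  have J': "J' \<subseteq> Idx" using depm_Idx[OF P] .
  have d1: "dep J' (\<lambda>\<omega>. P \<omega> $ i $ j * V \<omega> $ i)" for i j
    using P V unfolding depm_def depv_def by (intro dep_mult) auto
  have d2: "dep J (\<lambda>\<omega>. X \<omega> $ j)" for j using X unfolding depv_def by auto
  have "expectation (\<lambda>\<omega>. (P \<omega> *v X \<omega>) \<bullet> V \<omega>)
      = expectation (\<lambda>\<omega>. \<Sum>i\<in>UNIV. \<Sum>j\<in>UNIV. (P \<omega> $ i $ j * V \<omega> $ i) * X \<omega> $ j)"
    by (simp add: eq)
  also have "\<dots> = (\<Sum>i\<in>UNIV. \<Sum>j\<in>UNIV. expectation (\<lambda>\<omega>. (P \<omega> $ i $ j * V \<omega> $ i) * X \<omega> $ j))"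
    using dep_int_mult[OF d1 d2] by (simp add: Bochner_Integration.integral_sum integrable_sum)
  also have "\<dots> = 0"
    using dep_indep[OF d1 d2] disj X0 by (simp add: Int_commute)
  finally show ?thesis .
qed

lemma E_mean:
  assumes X: "depv J X" and X0: "\<And>i. expectation (\<lambda>\<omega>. X \<omega> $ i) = 0"
    and P: "depm J' P" and disj: "J \<inter> J' = {}"
  shows "expectation (\<lambda>\<omega>. (P \<omega> *v X \<omega>) $ i) = 0"
proof -
  have d1: "dep J' (\<lambda>\<omega>. P \<omega> $ i $ j)" for j using P unfolding depm_def by auto
  have d2: "dep J (\<lambda>\<omega>. X \<omega> $ j)" for j using X unfolding depv_def by auto
  have "expectation (\<lambda>\<omega>. (P \<omega> *v X \<omega>) $ i) = expectation (\<lambda>\<omega>. \<Sum>j\<in>UNIV. P \<omega> $ i $ j * X \<omega> $ j)"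
    by (simp add: matrix_vector_mult_def)
  also have "\<dots> = (\<Sum>j\<in>UNIV. expectation (\<lambda>\<omega>. P \<omega> $ i $ j * X \<omega> $ j))"
    using dep_int_mult[OF d1 d2] by (simp add: Bochner_Integration.integral_sum integrable_sum)
  also have "\<dots> = 0"
    using dep_indep[OF d1 d2] disj X0 by (simp add: Int_commute)
  finally show ?thesis .
qed

lemma E_orth:
  assumes X: "depv J X" and X0: "\<And>i. expectation (\<lambda>\<omega>. X \<omega> $ i) = 0"
    and V: "depv J' V" and disj: "J \<inter> J' = {}"
  shows "expectation (\<lambda>\<omega>. X \<omega> \<bullet> V \<omega>) = 0"
  using E_cross[OF X X0 depm_const[OF depv_Idx[OF V], of "mat 1"] V disj] by simp

lemma E_add_sq:
  assumes X: "depv J X" and Y: "depv J Y"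
  shows "expectation (\<lambda>\<omega>. (norm (X \<omega> + Y \<omega>))\<^sup>2)
     = expectation (\<lambda>\<omega>. (norm (X \<omega>))\<^sup>2) + 2 * expectation (\<lambda>\<omega>. X \<omega> \<bullet> Y \<omega>) + expectation (\<lambda>\<omega>. (norm (Y \<omega>))\<^sup>2)"
proof -
  have eq: "(norm (x + y))\<^sup>2 = (norm x)\<^sup>2 + 2 * (x \<bullet> y) + (norm y)\<^sup>2" for x y :: "real^'n"
    by (simp add: power2_norm_eq_inner inner_add_left inner_add_right inner_commute)
  have i1: "integrable M (\<lambda>\<omega>. (norm (X \<omega>))\<^sup>2)" "integrable M (\<lambda>\<omega>. (norm (Y \<omega>))\<^sup>2)"
    "integrable M (\<lambda>\<omega>. X \<omega> \<bullet> Y \<omega>)"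
    using dep_int dep_normsq dep_inner X Y by blast+
  show ?thesis unfolding eq using i1 by simp
qed

end

lemma nth2_meas: "(\<lambda>x::real^'n^'m. x $ i $ j) \<in> borel_measurable borel"
  by (intro borel_measurable_continuous_onI continuous_intros)

lemma meas_mat_entries:
  fixes f :: "'a \<Rightarrow> real^'n^'m"
  assumes "\<And>i j. (\<lambda>z. f z $ i $ j) \<in> borel_measurable S"
  shows "f \<in> borel_measurable S"
  unfolding borel_measurable_euclidean_space[where f=f]
proof
  fix u :: "real^'n^'m" assume "u \<in> Basis"
  then obtain i v where u: "u = axis i v" "v \<in> Basis" by (auto simp: Basis_vec_def)
  then obtain j where v: "v = axis j 1" by (auto simp: Basis_vec_def)
  show "(\<lambda>x. f x \<bullet> u) \<in> borel_measurable S"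
    using assms[of i j] by (simp add: u v inner_axis cart_eq_inner_axis[symmetric])
qed

lemma norm_mat_le: "norm (X::real^'n^'m) \<le> (\<Sum>i\<in>UNIV. \<Sum>j\<in>UNIV. \<bar>X $ i $ j\<bar>)"
proof -
  have "norm X \<le> (\<Sum>i\<in>UNIV. norm (X $ i))" by (simp add: norm_vec_def L2_set_le_sum)
  also have "\<dots> \<le> (\<Sum>i\<in>UNIV. \<Sum>j\<in>UNIV. \<bar>X $ i $ j\<bar>)" by (intro sum_mono norm_le_l1_cart)
  finally show ?thesis .
qed

lemma ent_le_norm: "\<bar>(X::real^'n^'m) $ i $ j\<bar> \<le> norm X"
  using component_le_norm_cart[of "X $ i" j] Finite_Cartesian_Product.norm_nth_le[of X i] by linarith

locale fl2 = fl M N S Zs H for M :: "'w measure" and N :: nat and S :: "'z measure"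
    and Zs :: "nat \<Rightarrow> nat \<Rightarrow> nat \<Rightarrow> 'w \<Rightarrow> 'z" and H :: "nat \<Rightarrow> nat" +
  fixes \<pi> :: "nat \<Rightarrow> 'z measure" and A :: "nat \<Rightarrow> 'z \<Rightarrow> real^'d::finite^'d" and b :: "nat \<Rightarrow> 'z \<Rightarrow> real^'d"
    and \<theta>s :: "nat \<Rightarrow> real^'d" and a eta_inf :: real and \<eta> :: "nat \<Rightarrow> real"
  assumes N: "N \<ge> 1"
    and pi_prob: "\<And>c. c < N \<Longrightarrow> prob_space (\<pi> c)"
    and pi_sets: "\<And>c. c < N \<Longrightarrow> sets (\<pi> c) = sets S"
    and A_meas: "\<And>c. c < N \<Longrightarrow> A c \<in> borel_measurable S"
    and b_meas: "\<And>c. c < N \<Longrightarrow> b c \<in> borel_measurable S"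
    and b_int: "\<And>c. c < N \<Longrightarrow> integrable (\<pi> c) (b c)"
    and a_pos: "a > 0" and eta_inf_pos: "eta_inf > 0" and eta_inf_a: "eta_inf * a \<le> 1/2"
    and A1: "\<And>c e u. c < N \<Longrightarrow> 0 < e \<Longrightarrow> e < eta_inf \<Longrightarrow>
        sqrt (integral\<^sup>L (\<pi> c) (\<lambda>z. (norm ((mat 1 - e *\<^sub>R A c z) *v u))\<^sup>2)) \<le> (1 - e * a) * norm u"
    and Zs_distr: "\<And>c s h. c < N \<Longrightarrow> 1 \<le> s \<Longrightarrow> 1 \<le> h \<Longrightarrow> h \<le> H s \<Longrightarrow> distr M S (Zs c s h) = \<pi> c"
    and eps_bdd: "\<exists>K. \<forall>c<N. \<forall>z\<in>space S. norm (eps \<pi> A b \<theta>s c z) \<le> K"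
    and A_bdd: "\<exists>K. \<forall>c<N. \<forall>z\<in>space S. norm (A c z) \<le> K \<and> norm (A c z - Abar \<pi> A c) \<le> K"
    and eta_pos: "\<And>s. 0 < \<eta> s" and eta_le: "\<And>s. \<eta> s \<le> eta_inf"
begin

abbreviation "ep \<equiv> eps \<pi> A b \<theta>s"

lemma space_pi: "c < N \<Longrightarrow> space (\<pi> c) = space S"
  using pi_sets sets_eq_imp_space_eq by blast

lemma A_ent_meas: "c < N \<Longrightarrow> (\<lambda>z. A c z $ i $ j) \<in> borel_measurable S"
  using measurable_compose[OF A_meas nth2_meas] by (simp add: comp_def)

lemma b_ent_meas: "c < N \<Longrightarrow> (\<lambda>z. b c z $ i) \<in> borel_measurable S"
  using measurable_compose[OF b_meas borel_measurable_nth] by (simp add: comp_def)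


end

context fl2 begin

lemma A_bound: obtains KA where "\<And>c z. c < N \<Longrightarrow> z \<in> space S \<Longrightarrow> norm (A c z) \<le> KA"
  using A_bdd by blast

lemma eps_bound: obtains KE where "\<And>c z. c < N \<Longrightarrow> z \<in> space S \<Longrightarrow> norm (ep c z) \<le> KE"
  using eps_bdd by blast

lemma eps_comp: "ep c z $ i = (\<Sum>j\<in>UNIV. (A c z $ i $ j - Abar \<pi> A c $ i $ j) * \<theta>s c $ j) - (b c z $ i - bbar \<pi> b c $ i)"
  by (simp add: eps_def matrix_vector_mult_def)

lemma eps_ent_meas: "c < N \<Longrightarrow> (\<lambda>z. ep c z $ i) \<in> borel_measurable S"
  unfolding eps_comp using A_ent_meas b_ent_meas by measurable

lemma A_int: assumes c: "c < N" shows "integrable (\<pi> c) (A c)"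
proof -
  interpret P: prob_space "\<pi> c" using pi_prob c .
  obtain KA where KA: "\<And>c z. c < N \<Longrightarrow> z \<in> space S \<Longrightarrow> norm (A c z) \<le> KA" using A_bound by blast
  have m: "A c \<in> borel_measurable (\<pi> c)"
    by (subst measurable_cong_sets[OF pi_sets[OF c] refl]) (rule A_meas[OF c])
  show ?thesis
    by (rule P.integrable_const_bound[where B=KA]) (use KA c space_pi[OF c] m in auto)
qed

lemma Abar_ent: "c < N \<Longrightarrow> Abar \<pi> A c $ i $ j = integral\<^sup>L (\<pi> c) (\<lambda>z. A c z $ i $ j)"
proof -
  assume c: "c < N"
  have bl: "bounded_linear (\<lambda>x::real^'d^'d. x $ i $ j)"
    by (rule bounded_linear_compose[where f="\<lambda>y. y $ j" and g="\<lambda>x. x $ i"]) (rule bounded_linear_vec_nth)+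
  show ?thesis unfolding Abar_def using integral_bounded_linear[OF bl A_int[OF c]] by simp
qed

lemma bbar_ent: "c < N \<Longrightarrow> bbar \<pi> b c $ i = integral\<^sup>L (\<pi> c) (\<lambda>z. b c z $ i)"
  unfolding bbar_def using integral_bounded_linear[OF bounded_linear_vec_nth b_int] by simp

lemma A_ent_int: "c < N \<Longrightarrow> integrable (\<pi> c) (\<lambda>z. A c z $ i $ j)"
proof -
  assume c: "c < N"
  have bl: "bounded_linear (\<lambda>x::real^'d^'d. x $ i $ j)"
    by (rule bounded_linear_compose[where f="\<lambda>y. y $ j" and g="\<lambda>x. x $ i"]) (rule bounded_linear_vec_nth)+
  show ?thesis using integrable_bounded_linear[OF bl A_int[OF c]] by simp
qed

lemma b_ent_int: "c < N \<Longrightarrow> integrable (\<pi> c) (\<lambda>z. b c z $ i)"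
  using integrable_bounded_linear[OF bounded_linear_vec_nth b_int] by simp

lemma eps_mean_pi: assumes c: "c < N" shows "integral\<^sup>L (\<pi> c) (\<lambda>z. ep c z $ i) = 0"
proof -
  interpret P: prob_space "\<pi> c" using pi_prob c .
  have i1: "integrable (\<pi> c) (\<lambda>z. (A c z $ i $ j - Abar \<pi> A c $ i $ j) * \<theta>s c $ j)" for j
    using A_ent_int[OF c] P.integrable_const by auto
  have "integral\<^sup>L (\<pi> c) (\<lambda>z. ep c z $ i)
     = (\<Sum>j\<in>UNIV. integral\<^sup>L (\<pi> c) (\<lambda>z. (A c z $ i $ j - Abar \<pi> A c $ i $ j) * \<theta>s c $ j))
       - integral\<^sup>L (\<pi> c) (\<lambda>z. b c z $ i - bbar \<pi> b c $ i)"
    unfolding eps_comp using i1 b_ent_int[OF c] P.integrable_const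
    by (simp add: Bochner_Integration.integral_sum integrable_sum)
  also have "\<dots> = 0"
    using A_ent_int[OF c] b_ent_int[OF c] P.prob_space
      P.integrable_const
    by (simp add: Abar_ent[OF c] bbar_ent[OF c])
  finally show ?thesis .
qed

lemma Idx_D: "(c, s, h) \<in> Idx \<Longrightarrow> c < N \<and> 1 \<le> s \<and> 1 \<le> h \<and> h \<le> H s"
  by (simp add: Idx_def)

lemma transfer:
  fixes F :: "'z \<Rightarrow> real"
  assumes k: "(c, s, h) \<in> Idx" and F: "F \<in> borel_measurable S"
  shows "expectation (\<lambda>\<omega>. F (ZZ (c, s, h) \<omega>)) = integral\<^sup>L (\<pi> c) F"
proof -
  have "integral\<^sup>L (distr M S (ZZ (c, s, h))) F = expectation (\<lambda>\<omega>. F (ZZ (c, s, h) \<omega>))"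
    by (rule integral_distr[OF ZZ_meas[OF k] F])
  moreover have "distr M S (ZZ (c, s, h)) = \<pi> c"
    using Zs_distr Idx_D[OF k] by (simp add: ZZ_def)
  ultimately show ?thesis by simp
qed

lemma normsq_eps_meas: "c < N \<Longrightarrow> (\<lambda>z. (norm (ep c z))\<^sup>2) \<in> borel_measurable S"
  unfolding normsq_vec using eps_ent_meas by measurable

lemma outer_ent: "outer v $ i $ j = v $ i * v $ j"
  by (simp add: outer_def)

lemma trace_Sigma: assumes c: "c < N"
  shows "mtrace (Sigma_eps \<pi> A b \<theta>s c) = integral\<^sup>L (\<pi> c) (\<lambda>z. (norm (ep c z))\<^sup>2)"
proof -
  interpret P: prob_space "\<pi> c" using pi_prob c .
  obtain KE where KE: "\<And>c z. c < N \<Longrightarrow> z \<in> space S \<Longrightarrow> norm (ep c z) \<le> KE" using eps_bound by blast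
  have m: "(\<lambda>z. outer (ep c z)) \<in> borel_measurable (\<pi> c)"
    apply (subst measurable_cong_sets[OF pi_sets[OF c] refl])
    apply (rule meas_mat_entries)
    unfolding outer_ent using eps_ent_meas[OF c] by measurable
  have bd: "norm (outer (ep c z)) \<le> (\<Sum>i\<in>(UNIV::'d set). \<Sum>j\<in>(UNIV::'d set). KE * KE)" if z: "z \<in> space (\<pi> c)" for z
  proof -
    have "norm (outer (ep c z)) \<le> (\<Sum>i\<in>UNIV. \<Sum>j\<in>UNIV. \<bar>outer (ep c z) $ i $ j\<bar>)" by (rule norm_mat_le)
    also have "\<dots> \<le> (\<Sum>i\<in>(UNIV::'d set). \<Sum>j\<in>(UNIV::'d set). KE * KE)"
    proof (intro sum_mono)
      fix i j
      have "\<bar>ep c z $ i\<bar> \<le> KE" "\<bar>ep c z $ j\<bar> \<le> KE"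
        using KE[OF c] z space_pi[OF c] component_le_norm_cart order.trans by blast+
      then show "\<bar>outer (ep c z) $ i $ j\<bar> \<le> KE * KE"
        unfolding outer_ent abs_mult by (intro mult_mono) auto
    qed
    finally show ?thesis .
  qed
  have int: "integrable (\<pi> c) (\<lambda>z. outer (ep c z))"
    by (rule P.integrable_const_bound[OF _ m]) (use bd in auto)
  have bl: "bounded_linear (\<lambda>x::real^'d^'d. x $ i $ i)" for i
    by (rule bounded_linear_compose[where f="\<lambda>y. y $ i" and g="\<lambda>x. x $ i"]) (rule bounded_linear_vec_nth)+
  have ent: "Sigma_eps \<pi> A b \<theta>s c $ i $ i = integral\<^sup>L (\<pi> c) (\<lambda>z. ep c z $ i * ep c z $ i)" for i
    unfolding Sigma_eps_def using integral_bounded_linear[OF bl int] by (simp add: outer_ent)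
  have int2: "integrable (\<pi> c) (\<lambda>z. ep c z $ i * ep c z $ i)" for i
    using integrable_bounded_linear[OF bl int] by (simp add: outer_ent)
  have e2: "(\<lambda>z. (norm (ep c z))\<^sup>2) = (\<lambda>z. \<Sum>i\<in>UNIV. ep c z $ i * ep c z $ i)"
    unfolding normsq_vec by (simp add: power2_eq_square)
  show ?thesis
    unfolding mtrace_def ent e2
    using int2 by (simp add: Bochner_Integration.integral_sum)
qed

lemma mat1_ent: "(mat 1 :: real^'n^'n) $ i $ j = (if i = j then 1 else 0)"
  by (simp add: mat_def)

lemma mat_ent: "(mat 1 - e *\<^sub>R X) $ i $ j = (if i = j then 1 else 0) - e * (X::real^'n^'n) $ i $ j"
  by (simp add: mat_def)

lemma dep_Bstep: assumes k: "(c, s, h) \<in> J" and J: "J \<subseteq> Idx"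
  shows "depm J (\<lambda>\<omega>. mat 1 - e *\<^sub>R A c (ZZ (c, s, h) \<omega>))"
  unfolding depm_def
proof (intro allI)
  fix i j
  have c: "c < N" using k J Idx_D by blast
  obtain KA where KA: "\<And>c z. c < N \<Longrightarrow> z \<in> space S \<Longrightarrow> norm (A c z) \<le> KA" using A_bound by blast
  have "dep J (\<lambda>\<omega>. (\<lambda>z. (if i = j then 1 else 0) - e * A c z $ i $ j) (ZZ (c, s, h) \<omega>))"
  proof (rule dep_single[OF k J, where K="1 + \<bar>e\<bar> * KA"])
    show "(\<lambda>z. (if i = j then 1 else 0) - e * A c z $ i $ j) \<in> borel_measurable S"
      using A_ent_meas[OF c] by measurable
    fix z assume z: "z \<in> space S"
    have "\<bar>A c z $ i $ j\<bar> \<le> KA" using ent_le_norm KA[OF c z] order.trans by blast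
    then have "\<bar>e * A c z $ i $ j\<bar> \<le> \<bar>e\<bar> * KA" by (simp add: abs_mult mult_left_mono)
    then show "\<bar>(if i = j then 1 else 0) - e * A c z $ i $ j\<bar> \<le> 1 + \<bar>e\<bar> * KA" by auto
  qed
  then show "dep J (\<lambda>\<omega>. (mat 1 - e *\<^sub>R A c (ZZ (c, s, h) \<omega>)) $ i $ j)" by (simp add: mat1_ent)
qed

lemma dep_epsv: assumes k: "(c, s, h) \<in> J" and J: "J \<subseteq> Idx"
  shows "depv J (\<lambda>\<omega>. ep c (ZZ (c, s, h) \<omega>))"
  unfolding depv_def
proof
  fix i
  have c: "c < N" using k J Idx_D by blast
  obtain KE where KE: "\<And>c z. c < N \<Longrightarrow> z \<in> space S \<Longrightarrow> norm (ep c z) \<le> KE" using eps_bound by blast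
  show "dep J (\<lambda>\<omega>. ep c (ZZ (c, s, h) \<omega>) $ i)"
  proof (rule dep_single[OF k J, where K=KE and F="\<lambda>z. ep c z $ i"])
    show "(\<lambda>z. ep c z $ i) \<in> borel_measurable S" using eps_ent_meas[OF c] .
    fix z assume z: "z \<in> space S"
    show "\<bar>ep c z $ i\<bar> \<le> KE" using component_le_norm_cart KE[OF c z] order.trans by blast
  qed
qed

lemma E_eps_mean: assumes k: "(c, s, h) \<in> Idx"
  shows "expectation (\<lambda>\<omega>. ep c (ZZ (c, s, h) \<omega>) $ i) = 0"
  using transfer[OF k eps_ent_meas[of c i]] eps_mean_pi Idx_D[OF k] by simp

lemma E_eps_sq: assumes k: "(c, s, h) \<in> Idx"
  shows "expectation (\<lambda>\<omega>. (norm (ep c (ZZ (c, s, h) \<omega>)))\<^sup>2) = mtrace (Sigma_eps \<pi> A b \<theta>s c)"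
  using transfer[OF k normsq_eps_meas[of c]] trace_Sigma Idx_D[OF k] by simp

lemma mv_normsq_expand:
  "(norm ((B::real^'n^'m) *v x))\<^sup>2 = (\<Sum>i\<in>UNIV. \<Sum>j\<in>UNIV. \<Sum>l\<in>UNIV. (B $ i $ j * B $ i $ l) * (x $ j * x $ l))"
  unfolding normsq_vec by (simp add: matrix_vector_mult_def power2_eq_square sum_product mult_ac)

lemma int_pi: assumes c: "c < N" and F: "F \<in> borel_measurable S" and K: "\<And>z. z \<in> space S \<Longrightarrow> \<bar>F z\<bar> \<le> K"
  shows "integrable (\<pi> c) (F :: 'z \<Rightarrow> real)"
proof -
  interpret P: prob_space "\<pi> c" using pi_prob c .
  have m: "F \<in> borel_measurable (\<pi> c)"
    by (subst measurable_cong_sets[OF pi_sets[OF c] refl]) (rule F)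
  show ?thesis by (rule P.integrable_const_bound[OF _ m, where B=K]) (use K space_pi[OF c] in auto)
qed

lemma A1_sq: assumes c: "c < N" and e: "0 < e" "e < eta_inf"
  shows "integral\<^sup>L (\<pi> c) (\<lambda>z. (norm ((mat 1 - e *\<^sub>R A c z) *v u))\<^sup>2) \<le> (1 - e * a)\<^sup>2 * (norm u)\<^sup>2"
proof -
  let ?I = "integral\<^sup>L (\<pi> c) (\<lambda>z. (norm ((mat 1 - e *\<^sub>R A c z) *v u))\<^sup>2)"
  have I0: "0 \<le> ?I" by (rule integral_nonneg_AE) auto
  have "sqrt ?I \<le> (1 - e * a) * norm u" using A1[OF c e] .
  then have "(sqrt ?I)\<^sup>2 \<le> ((1 - e * a) * norm u)\<^sup>2" by (rule power_mono) simp
  then show ?thesis using I0 by (simp add: power_mult_distrib)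
qed

lemma A1_cl: assumes c: "c < N" and e: "0 < e" "e \<le> eta_inf"
  shows "integral\<^sup>L (\<pi> c) (\<lambda>z. (norm ((mat 1 - e *\<^sub>R A c z) *v u))\<^sup>2) \<le> (1 - e * a)\<^sup>2 * (norm u)\<^sup>2"
proof (cases "e < eta_inf")
  case True then show ?thesis using A1_sq[OF c e(1)] by blast
next
  case False
  then have ee: "e = eta_inf" using e by simp
  obtain KA where KA: "\<And>c z. c < N \<Longrightarrow> z \<in> space S \<Longrightarrow> norm (A c z) \<le> KA" using A_bound by blast
  define w where "w i z = (\<Sum>j\<in>UNIV. A c z $ i $ j * u $ j)" for i z
  have wm: "(\<lambda>z. w i z) \<in> borel_measurable S" for i unfolding w_def using A_ent_meas[OF c] by measurable
  have wb: "\<bar>w i z\<bar> \<le> (\<Sum>j\<in>UNIV. KA * \<bar>u $ j\<bar>)" if z: "z \<in> space S" for i z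
  proof -
    have "\<bar>w i z\<bar> \<le> (\<Sum>j\<in>UNIV. \<bar>A c z $ i $ j * u $ j\<bar>)" unfolding w_def by (rule sum_abs)
    also have "\<dots> \<le> (\<Sum>j\<in>UNIV. KA * \<bar>u $ j\<bar>)"
    proof (intro sum_mono)
      fix j
      have "\<bar>A c z $ i $ j\<bar> \<le> KA" using ent_le_norm KA[OF c z] order.trans by blast
      then show "\<bar>A c z $ i $ j * u $ j\<bar> \<le> KA * \<bar>u $ j\<bar>" by (simp add: abs_mult mult_right_mono)
    qed
    finally show ?thesis .
  qed
  let ?W = "\<Sum>j\<in>UNIV. KA * \<bar>u $ j\<bar>"
  have wi: "integrable (\<pi> c) (w i)" for i by (rule int_pi[OF c wm wb])
  have wi2: "integrable (\<pi> c) (\<lambda>z. w i z * w i z)" for i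
  proof (rule int_pi[OF c _, where K="?W * ?W"])
    show "(\<lambda>z. w i z * w i z) \<in> borel_measurable S" using wm by measurable
    fix z assume z: "z \<in> space S"
    have h: "\<bar>w i z\<bar> \<le> ?W" using wb[OF z] .
    have "\<bar>w i z\<bar> * \<bar>w i z\<bar> \<le> ?W * ?W" using h by (rule mult_mono) (use h in auto)
    then show "\<bar>w i z * w i z\<bar> \<le> ?W * ?W" by (simp add: abs_mult)
  qed
  define p where "p f = (\<Sum>i\<in>UNIV. u $ i * u $ i - 2 * f * u $ i * integral\<^sup>L (\<pi> c) (w i)
       + f * f * integral\<^sup>L (\<pi> c) (\<lambda>z. w i z * w i z))" for f
  have pe: "integral\<^sup>L (\<pi> c) (\<lambda>z. (norm ((mat 1 - f *\<^sub>R A c z) *v u))\<^sup>2) = p f" for f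
  proof -
    interpret P: prob_space "\<pi> c" using pi_prob c .
    have "(norm ((mat 1 - f *\<^sub>R A c z) *v u))\<^sup>2
       = (\<Sum>i\<in>UNIV. u $ i * u $ i - 2 * f * u $ i * w i z + f * f * (w i z * w i z))" for z
    proof -
      have e1: "(mat 1 - f *\<^sub>R A c z) *v u = u - f *\<^sub>R (A c z *v u)"
        by (simp add: matrix_vector_mult_diff_rdistrib scaleR_matrix_vector_assoc)
      have e2: "(A c z *v u) $ i = w i z" for i by (simp add: w_def matrix_vector_mult_def)
      show ?thesis unfolding e1 normsq_vec
        by (intro sum.cong refl) (simp add: e2 power2_eq_square algebra_simps)
    qed
    then have "integral\<^sup>L (\<pi> c) (\<lambda>z. (norm ((mat 1 - f *\<^sub>R A c z) *v u))\<^sup>2)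
       = integral\<^sup>L (\<pi> c) (\<lambda>z. \<Sum>i\<in>UNIV. u $ i * u $ i - 2 * f * u $ i * w i z + f * f * (w i z * w i z))"
      by simp
    also have "\<dots> = p f"
      unfolding p_def using wi wi2
      by (simp add: Bochner_Integration.integral_sum integrable_sum P.prob_space)
    finally show ?thesis .
  qed
  have lim1: "(p \<longlongrightarrow> p eta_inf) (at_left eta_inf)" unfolding p_def by (intro tendsto_intros)
  have lim2: "((\<lambda>f. (1 - f * a)\<^sup>2 * (norm u)\<^sup>2) \<longlongrightarrow> (1 - eta_inf * a)\<^sup>2 * (norm u)\<^sup>2) (at_left eta_inf)"
    by (intro tendsto_intros)
  have ev: "eventually (\<lambda>f. p f \<le> (1 - f * a)\<^sup>2 * (norm u)\<^sup>2) (at_left eta_inf)"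
    using eventually_at_left_real[OF eta_inf_pos]
  proof eventually_elim
    case (elim f)
    then have "0 < f" "f < eta_inf" by auto
    then show ?case using A1_sq[OF c, of f u] pe[of f] by simp
  qed
  have "p eta_inf \<le> (1 - eta_inf * a)\<^sup>2 * (norm u)\<^sup>2"
    by (rule tendsto_le[OF trivial_limit_at_left_real lim2 lim1 ev])
  then show ?thesis using pe ee by simp
qed

end

context fl2 begin

lemma B_ent_meas: "c < N \<Longrightarrow> (\<lambda>z. (mat 1 - e *\<^sub>R A c z) $ i $ j) \<in> borel_measurable S"
  unfolding mat_ent using A_ent_meas by measurable

lemma B_ent_bd: assumes c: "c < N" obtains K where "\<And>z i j. z \<in> space S \<Longrightarrow> \<bar>(mat 1 - e *\<^sub>R A c z) $ i $ j\<bar> \<le> K"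
proof -
  obtain KA where KA: "\<And>c z. c < N \<Longrightarrow> z \<in> space S \<Longrightarrow> norm (A c z) \<le> KA" using A_bound by blast
  have "\<bar>(mat 1 - e *\<^sub>R A c z) $ i $ j\<bar> \<le> 1 + \<bar>e\<bar> * KA" if z: "z \<in> space S" for z i j
  proof -
    have "\<bar>A c z $ i $ j\<bar> \<le> KA" using ent_le_norm KA[OF c z] order.trans by blast
    then have "\<bar>e * A c z $ i $ j\<bar> \<le> \<bar>e\<bar> * KA" by (simp add: abs_mult mult_left_mono)
    then show ?thesis unfolding mat_ent by auto
  qed
  then show ?thesis using that by blast
qed

lemma E_contr:
  assumes X: "depv J X" and k: "(c, s, h) \<in> Idx" "(c, s, h) \<notin> J" and e: "0 < e" "e \<le> eta_inf"
  shows "expectation (\<lambda>\<omega>. (norm ((mat 1 - e *\<^sub>R A c (ZZ (c, s, h) \<omega>)) *v X \<omega>))\<^sup>2)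
      \<le> (1 - e * a)\<^sup>2 * expectation (\<lambda>\<omega>. (norm (X \<omega>))\<^sup>2)"
proof -
  define B where "B z = mat 1 - e *\<^sub>R A c z" for z
  define Q where "Q i j l = integral\<^sup>L (\<pi> c) (\<lambda>z. B z $ i $ j * B z $ i $ l)" for i j l
  have c: "c < N" using Idx_D[OF k(1)] by blast
  have kI: "{(c, s, h)} \<subseteq> Idx" using k by auto
  have dB: "dep {(c, s, h)} (\<lambda>\<omega>. B (ZZ (c, s, h) \<omega>) $ i $ j * B (ZZ (c, s, h) \<omega>) $ i $ l)" for i j l
    using dep_Bstep[of c s h "{(c, s, h)}" e, OF _ kI] unfolding depm_def B_def by (intro dep_mult) auto
  have dX: "dep J (\<lambda>\<omega>. X \<omega> $ j * X \<omega> $ l)" for j l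
    using X unfolding depv_def by (intro dep_mult) auto
  have disj: "{(c, s, h)} \<inter> J = {}" using k by auto
  have Bm: "(\<lambda>z. B z $ i $ j * B z $ i $ l) \<in> borel_measurable S" for i j l
    unfolding B_def using B_ent_meas[OF c] by measurable
  obtain K where K: "\<And>z i j. z \<in> space S \<Longrightarrow> \<bar>B z $ i $ j\<bar> \<le> K" using B_ent_bd[OF c] unfolding B_def by blast
  have Bi: "integrable (\<pi> c) (\<lambda>z. B z $ i $ j * B z $ i $ l)" for i j l
  proof (rule int_pi[OF c Bm, where K="K * K"])
    fix z assume z: "z \<in> space S"
    have h1: "\<bar>B z $ i $ j\<bar> \<le> K" "\<bar>B z $ i $ l\<bar> \<le> K" using K[OF z] by auto
    have "\<bar>B z $ i $ j\<bar> * \<bar>B z $ i $ l\<bar> \<le> K * K" using h1 by (rule mult_mono) (use h1 in auto)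
    then show "\<bar>B z $ i $ j * B z $ i $ l\<bar> \<le> K * K" by (simp add: abs_mult)
  qed
  have EB: "expectation (\<lambda>\<omega>. B (ZZ (c, s, h) \<omega>) $ i $ j * B (ZZ (c, s, h) \<omega>) $ i $ l) = Q i j l" for i j l
    unfolding Q_def using transfer[OF k(1) Bm] .
  have pw: "(\<Sum>i\<in>UNIV. \<Sum>j\<in>UNIV. \<Sum>l\<in>UNIV. Q i j l * (x $ j * x $ l)) \<le> (1 - e * a)\<^sup>2 * (norm x)\<^sup>2" for x
  proof -
    have "(\<Sum>i\<in>UNIV. \<Sum>j\<in>UNIV. \<Sum>l\<in>UNIV. Q i j l * (x $ j * x $ l))
        = integral\<^sup>L (\<pi> c) (\<lambda>z. (norm (B z *v x))\<^sup>2)"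
      unfolding mv_normsq_expand Q_def using Bi
      by (simp add: Bochner_Integration.integral_sum integrable_sum)
    also have "\<dots> \<le> (1 - e * a)\<^sup>2 * (norm x)\<^sup>2" unfolding B_def by (rule A1_cl[OF c e])
    finally show ?thesis .
  qed
  have "expectation (\<lambda>\<omega>. (norm (B (ZZ (c, s, h) \<omega>) *v X \<omega>))\<^sup>2)
      = expectation (\<lambda>\<omega>. \<Sum>i\<in>UNIV. \<Sum>j\<in>UNIV. \<Sum>l\<in>UNIV.
           (B (ZZ (c, s, h) \<omega>) $ i $ j * B (ZZ (c, s, h) \<omega>) $ i $ l) * (X \<omega> $ j * X \<omega> $ l))"
    unfolding mv_normsq_expand ..
  also have "\<dots> = (\<Sum>i\<in>UNIV. \<Sum>j\<in>UNIV. \<Sum>l\<in>UNIV.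
           expectation (\<lambda>\<omega>. (B (ZZ (c, s, h) \<omega>) $ i $ j * B (ZZ (c, s, h) \<omega>) $ i $ l) * (X \<omega> $ j * X \<omega> $ l)))"
    using dep_int_mult[OF dB dX] by (simp add: Bochner_Integration.integral_sum integrable_sum)
  also have "\<dots> = (\<Sum>i\<in>UNIV. \<Sum>j\<in>UNIV. \<Sum>l\<in>UNIV. Q i j l * expectation (\<lambda>\<omega>. X \<omega> $ j * X \<omega> $ l))"
    using dep_indep[OF dB dX disj] EB by simp
  also have "\<dots> = expectation (\<lambda>\<omega>. \<Sum>i\<in>UNIV. \<Sum>j\<in>UNIV. \<Sum>l\<in>UNIV. Q i j l * (X \<omega> $ j * X \<omega> $ l))"
    using dep_int[OF dX] by (simp add: Bochner_Integration.integral_sum integrable_sum)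
  also have "\<dots> \<le> expectation (\<lambda>\<omega>. (1 - e * a)\<^sup>2 * (norm (X \<omega>))\<^sup>2)"
    using dep_int[OF dX] dep_int[OF dep_normsq[OF X]] pw
    by (intro integral_mono) (auto intro!: integrable_sum)
  also have "\<dots> = (1 - e * a)\<^sup>2 * expectation (\<lambda>\<omega>. (norm (X \<omega>))\<^sup>2)" by simp
  finally show ?thesis unfolding B_def .
qed

end

lemma lprod_empty: "r < l \<Longrightarrow> lprod F l r = mat 1"
  by (simp add: lprod_def)

lemma lprod_Suc: "l \<le> Suc r \<Longrightarrow> lprod F l (Suc r) = F (Suc r) ** lprod F l r"
  by (simp add: lprod_def)

lemma mv_sum: "finite T \<Longrightarrow> P *v (\<Sum>x\<in>T. f x) = (\<Sum>x\<in>T. P *v f x)"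
  by (induction T rule: finite_induct) (auto simp: matrix_vector_right_distrib)

context fl2 begin

definition "Zw \<omega> = (\<lambda>c s h. Zs c s h \<omega>)"

lemma ZZ_apply: "ZZ (c, s, h) \<omega> = Zs c s h \<omega>" by (simp add: ZZ_def)
lemma Zw_apply: "Zw \<omega> c s h = Zs c s h \<omega>" by (simp add: Zw_def)

abbreviation "GG \<omega> c s l r \<equiv> Gam A (Zw \<omega>) \<eta> c s l r"

lemma Gam_empty: "r < l \<Longrightarrow> Gam A Z \<eta> c s l r = mat 1"
  by (simp add: Gam_def lprod_empty)

lemma Gam_Suc: "l \<le> Suc r \<Longrightarrow> Gam A Z \<eta> c s l (Suc r) = (mat 1 - \<eta> s *\<^sub>R A c (Z c s (Suc r))) ** Gam A Z \<eta> c s l r"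
  by (simp add: Gam_def lprod_Suc)

lemma GG_Suc: "l \<le> Suc r \<Longrightarrow> GG \<omega> c s l (Suc r) = (mat 1 - \<eta> s *\<^sub>R A c (ZZ (c, s, Suc r) \<omega>)) ** GG \<omega> c s l r"
  by (subst Gam_Suc) (auto simp: Zw_apply ZZ_apply)

lemma depm_Gam: assumes J: "J \<subseteq> Idx" and H: "\<And>h. l \<le> h \<Longrightarrow> h \<le> r \<Longrightarrow> (c, s, h) \<in> J"
  shows "depm J (\<lambda>\<omega>. GG \<omega> c s l r)"
  using H
proof (induction r)
  case 0
  show ?case
  proof (cases "l = 0")
    case True
    have "GG \<omega> c s l 0 = (mat 1 - \<eta> s *\<^sub>R A c (Zs c s 0 \<omega>)) ** mat 1" for \<omega>
      using True by (simp add: Gam_def lprod_def Zw_apply)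
    moreover have "depm J (\<lambda>\<omega>. (mat 1 - \<eta> s *\<^sub>R A c (ZZ (c, s, 0) \<omega>)) ** mat 1)"
      using 0 True J by (intro depm_mm dep_Bstep depm_const) auto
    ultimately show ?thesis by (simp add: ZZ_apply)
  next
    case False then show ?thesis using J by (simp add: Gam_empty depm_const)
  qed
next
  case (Suc r)
  show ?case
  proof (cases "l \<le> Suc r")
    case True
    have "depm J (\<lambda>\<omega>. (mat 1 - \<eta> s *\<^sub>R A c (ZZ (c, s, Suc r) \<omega>)) ** GG \<omega> c s l r)"
      using Suc True J by (intro depm_mm dep_Bstep) auto
    then show ?thesis using True by (simp only: GG_Suc)
  next
    case False then show ?thesis using J by (simp add: Gam_empty depm_const)
  qed
qed

definition "Ag c s k = {(c, s, h) | h. 1 \<le> h \<and> h \<le> k}"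

lemma Ag_sub: "c < N \<Longrightarrow> 1 \<le> s \<Longrightarrow> k \<le> H s \<Longrightarrow> Ag c s k \<subseteq> Idx"
  by (auto simp: Ag_def Idx_def)

lemma E_Gam_contr:
  assumes X: "depv J X" and c: "c < N" and s: "1 \<le> s" and k: "k \<le> H s" and disj: "J \<inter> Ag c s (H s) = {}"
  shows "expectation (\<lambda>\<omega>. (norm (GG \<omega> c s 1 k *v X \<omega>))\<^sup>2)
      \<le> ((1 - \<eta> s * a)\<^sup>2) ^ k * expectation (\<lambda>\<omega>. (norm (X \<omega>))\<^sup>2)"
  using k
proof (induction k)
  case 0
  then show ?case by (simp add: Gam_empty)
next
  case (Suc k)
  have J: "J \<subseteq> Idx" using depv_Idx[OF X] .
  let ?J = "J \<union> Ag c s k"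
  have JI: "?J \<subseteq> Idx" using J Ag_sub[OF c s] Suc by auto
  have dY: "depv ?J (\<lambda>\<omega>. GG \<omega> c s 1 k *v X \<omega>)"
    by (intro depv_mv depm_Gam JI depv_mono[OF X]) (use JI in \<open>auto simp: Ag_def\<close>)
  have kI: "(c, s, Suc k) \<in> Idx" using c s Suc by (auto simp: Idx_def)
  have kJ: "(c, s, Suc k) \<notin> ?J" using disj Suc by (auto simp: Ag_def)
  have "expectation (\<lambda>\<omega>. (norm (GG \<omega> c s 1 (Suc k) *v X \<omega>))\<^sup>2)
      = expectation (\<lambda>\<omega>. (norm ((mat 1 - \<eta> s *\<^sub>R A c (ZZ (c, s, Suc k) \<omega>)) *v (GG \<omega> c s 1 k *v X \<omega>)))\<^sup>2)"
  proof -
    have "1 \<le> Suc k" by simp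
    note g = GG_Suc[OF this]
    show ?thesis by (simp only: g matrix_vector_mul_assoc[symmetric])
  qed
  also have "\<dots> \<le> (1 - \<eta> s * a)\<^sup>2 * expectation (\<lambda>\<omega>. (norm (GG \<omega> c s 1 k *v X \<omega>))\<^sup>2)"
    by (rule E_contr[OF dY kI kJ eta_pos eta_le])
  also have "\<dots> \<le> (1 - \<eta> s * a)\<^sup>2 * (((1 - \<eta> s * a)\<^sup>2) ^ k * expectation (\<lambda>\<omega>. (norm (X \<omega>))\<^sup>2))"
    using Suc by (intro mult_left_mono) auto
  finally show ?case by simp
qed

end

lemma arith1:
  fixes x k :: real assumes x: "0 < x" "x \<le> 1" and k: "0 \<le> k"
  shows "(1 - x)\<^sup>2 * min k (1 / x) + 1 \<le> min (k + 1) (1 / x)"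
proof -
  have q0: "0 \<le> (1 - x)\<^sup>2" by simp
  have q1: "(1 - x)\<^sup>2 \<le> 1" using x by (simp add: power2_eq_square mult_le_one)
  have m0: "0 \<le> min k (1 / x)" using k x by simp
  have a1: "(1 - x)\<^sup>2 * min k (1 / x) \<le> k"
  proof -
    have "(1 - x)\<^sup>2 * min k (1 / x) \<le> 1 * min k (1 / x)" by (rule mult_right_mono[OF q1 m0])
    then show ?thesis by simp
  qed
  have a2: "(1 - x)\<^sup>2 * min k (1 / x) \<le> (1 - x)\<^sup>2 * (1 / x)" by (rule mult_left_mono[OF _ q0]) simp
  have a3: "(1 - x)\<^sup>2 * (1 / x) + 1 \<le> 1 / x"
  proof -
    have "(1 - x)\<^sup>2 + x \<le> 1" using x by (simp add: power2_eq_square algebra_simps mult_le_cancel_left1)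
    then have "((1 - x)\<^sup>2 + x) / x \<le> 1 / x" using x by (simp add: divide_right_mono)
    then show ?thesis using x by (simp add: add_divide_distrib)
  qed
  show ?thesis using a1 a2 a3 by simp
qed

context fl2 begin

definition "uu c s k \<omega> = (\<Sum>h=1..k. GG \<omega> c s (h + 1) k *v ep c (Zs c s h \<omega>))"

lemma uu_0: "uu c s 0 \<omega> = 0" by (simp add: uu_def)

lemma uu_Suc: "uu c s (Suc k) \<omega> = (mat 1 - \<eta> s *\<^sub>R A c (ZZ (c, s, Suc k) \<omega>)) *v uu c s k \<omega> + ep c (ZZ (c, s, Suc k) \<omega>)"
proof -
  have "uu c s (Suc k) \<omega> = (\<Sum>h=1..k. GG \<omega> c s (h + 1) (Suc k) *v ep c (Zs c s h \<omega>))
      + GG \<omega> c s (Suc k + 1) (Suc k) *v ep c (Zs c s (Suc k) \<omega>)"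
    by (simp add: uu_def)
  also have "GG \<omega> c s (Suc k + 1) (Suc k) = mat 1" by (simp add: Gam_empty)
  also have "(\<Sum>h=1..k. GG \<omega> c s (h + 1) (Suc k) *v ep c (Zs c s h \<omega>))
      = (\<Sum>h=1..k. (mat 1 - \<eta> s *\<^sub>R A c (ZZ (c, s, Suc k) \<omega>)) *v (GG \<omega> c s (h + 1) k *v ep c (Zs c s h \<omega>)))"
    by (intro sum.cong refl) (simp add: GG_Suc matrix_vector_mul_assoc)
  also have "\<dots> = (mat 1 - \<eta> s *\<^sub>R A c (ZZ (c, s, Suc k) \<omega>)) *v uu c s k \<omega>"
    by (simp add: uu_def mv_sum)
  finally show ?thesis by (simp add: ZZ_apply)
qed

lemma eta_a: "0 < \<eta> s * a" "\<eta> s * a \<le> 1"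
proof -
  show "0 < \<eta> s * a" using eta_pos a_pos by simp
  have "\<eta> s * a \<le> eta_inf * a" using eta_le a_pos by (simp add: mult_right_mono)
  then show "\<eta> s * a \<le> 1" using eta_inf_a by simp
qed

lemma tr_nonneg: "c < N \<Longrightarrow> 0 \<le> mtrace (Sigma_eps \<pi> A b \<theta>s c)"
  using trace_Sigma by (simp add: integral_nonneg_AE)

lemma uu_props:
  assumes c: "c < N" and s: "1 \<le> s" and k: "k \<le> H s"
  shows "depv (Ag c s k) (uu c s k) \<and> (\<forall>i. expectation (\<lambda>\<omega>. uu c s k \<omega> $ i) = 0) \<and>
    expectation (\<lambda>\<omega>. (norm (uu c s k \<omega>))\<^sup>2) \<le> min (real k) (1 / (\<eta> s * a)) * mtrace (Sigma_eps \<pi> A b \<theta>s c)"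
  using k
proof (induction k)
  case 0
  have "Ag c s (0::nat) = {}" by (auto simp: Ag_def)
  then show ?case using eta_a[of s] by (simp add: uu_0 depv_const min_def)
next
  case (Suc k)
  let ?tr = "mtrace (Sigma_eps \<pi> A b \<theta>s c)"
  let ?J = "Ag c s (Suc k)"
  let ?kk = "(c, s, Suc k)"
  let ?B = "\<lambda>\<omega>. mat 1 - \<eta> s *\<^sub>R A c (ZZ ?kk \<omega>)"
  let ?e = "\<lambda>\<omega>. ep c (ZZ ?kk \<omega>)"
  from Suc have IH: "depv (Ag c s k) (uu c s k)" "\<And>i. expectation (\<lambda>\<omega>. uu c s k \<omega> $ i) = 0"
    "expectation (\<lambda>\<omega>. (norm (uu c s k \<omega>))\<^sup>2) \<le> min (real k) (1 / (\<eta> s * a)) * ?tr" by auto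
  have JI: "?J \<subseteq> Idx" using Ag_sub[OF c s Suc(2)] .
  have kI: "?kk \<in> Idx" using c s Suc(2) by (auto simp: Idx_def)
  have kJ: "?kk \<in> ?J" by (auto simp: Ag_def)
  have kn: "?kk \<notin> Ag c s k" by (auto simp: Ag_def)
  have sub: "Ag c s k \<subseteq> ?J" by (auto simp: Ag_def)
  have kI1: "{?kk} \<subseteq> Idx" using kI by simp
  have dB: "depm {?kk} ?B" by (rule dep_Bstep) (use kI in auto)
  have de: "depv {?kk} ?e" by (rule dep_epsv) (use kI in auto)
  have disj: "Ag c s k \<inter> {?kk} = {}" using kn by auto
  have dBu: "depv ?J (\<lambda>\<omega>. ?B \<omega> *v uu c s k \<omega>)"
    by (intro depv_mv depm_mono[OF dB] depv_mono[OF IH(1)]) (use kJ sub JI in auto)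
  have deJ: "depv ?J ?e" by (rule depv_mono[OF de]) (use kJ JI in auto)
  have eq: "uu c s (Suc k) = (\<lambda>\<omega>. ?B \<omega> *v uu c s k \<omega> + ?e \<omega>)" by (simp add: uu_Suc fun_eq_iff)
  have d: "depv ?J (uu c s (Suc k))" unfolding eq by (rule depv_add[OF dBu deJ])
  have m: "expectation (\<lambda>\<omega>. uu c s (Suc k) \<omega> $ i) = 0" for i
  proof -
    have "expectation (\<lambda>\<omega>. uu c s (Suc k) \<omega> $ i)
        = expectation (\<lambda>\<omega>. (?B \<omega> *v uu c s k \<omega>) $ i) + expectation (\<lambda>\<omega>. ?e \<omega> $ i)"
    proof -
      have "integrable M (\<lambda>\<omega>. (?B \<omega> *v uu c s k \<omega>) $ i)" "integrable M (\<lambda>\<omega>. ?e \<omega> $ i)"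
        using dep_int dBu deJ unfolding depv_def by blast+
      then show ?thesis unfolding eq by simp
    qed
    also have "\<dots> = 0" using E_mean[OF IH(1) IH(2) dB disj] E_eps_mean[OF kI] by simp
    finally show ?thesis .
  qed
  have tr: "expectation (\<lambda>\<omega>. (norm (?e \<omega>))\<^sup>2) = ?tr" by (rule E_eps_sq[OF kI])
  have cr: "expectation (\<lambda>\<omega>. (?B \<omega> *v uu c s k \<omega>) \<bullet> ?e \<omega>) = 0"
    by (rule E_cross[OF IH(1) IH(2) dB de disj])
  have ct: "expectation (\<lambda>\<omega>. (norm (?B \<omega> *v uu c s k \<omega>))\<^sup>2) \<le> (1 - \<eta> s * a)\<^sup>2 * expectation (\<lambda>\<omega>. (norm (uu c s k \<omega>))\<^sup>2)"
    by (rule E_contr[OF IH(1) kI kn eta_pos eta_le])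
  have "expectation (\<lambda>\<omega>. (norm (uu c s (Suc k) \<omega>))\<^sup>2)
      = expectation (\<lambda>\<omega>. (norm (?B \<omega> *v uu c s k \<omega>))\<^sup>2) + ?tr"
    unfolding eq E_add_sq[OF dBu deJ] cr tr by simp
  also have "\<dots> \<le> (1 - \<eta> s * a)\<^sup>2 * (min (real k) (1 / (\<eta> s * a)) * ?tr) + ?tr"
  proof -
    have "(1 - \<eta> s * a)\<^sup>2 * expectation (\<lambda>\<omega>. (norm (uu c s k \<omega>))\<^sup>2)
        \<le> (1 - \<eta> s * a)\<^sup>2 * (min (real k) (1 / (\<eta> s * a)) * ?tr)"
      by (rule mult_left_mono[OF IH(3)]) simp
    then show ?thesis using ct by linarith
  qed
  also have "\<dots> = ((1 - \<eta> s * a)\<^sup>2 * min (real k) (1 / (\<eta> s * a)) + 1) * ?tr" by (simp add: algebra_simps)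
  also have "\<dots> \<le> min (real k + 1) (1 / (\<eta> s * a)) * ?tr"
    by (rule mult_right_mono[OF arith1[OF eta_a] tr_nonneg[OF c]]) simp
  finally show ?case using d m by (simp add: add.commute)
qed

end

lemma mv_sum_left: "finite T \<Longrightarrow> (\<Sum>x\<in>T. P x) *v v = (\<Sum>x\<in>T. P x *v v)"
  by (induction T rule: finite_induct) (auto simp: matrix_vector_mult_add_rdistrib)

lemma jensen_avg:
  fixes v :: "nat \<Rightarrow> real^'n" assumes N: "N \<ge> 1"
  shows "(norm ((1 / real N) *\<^sub>R (\<Sum>c<N. v c)))\<^sup>2 \<le> (1 / real N) * (\<Sum>c<N. (norm (v c))\<^sup>2)"
proof -
  have "norm ((1 / real N) *\<^sub>R (\<Sum>c<N. v c)) \<le> (1 / real N) * (\<Sum>c<N. norm (v c))"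
    using norm_sum[of v "{..<N}"] by (simp add: divide_right_mono)
  then have "(norm ((1 / real N) *\<^sub>R (\<Sum>c<N. v c)))\<^sup>2 \<le> ((1 / real N) * (\<Sum>c<N. norm (v c)))\<^sup>2"
    by (rule power_mono) simp
  also have "\<dots> = (1 / real N)\<^sup>2 * (\<Sum>c<N. norm (v c))\<^sup>2" by (simp only: power_mult_distrib)
  also have "\<dots> \<le> (1 / real N)\<^sup>2 * ((\<Sum>c<N. (norm (v c))\<^sup>2) * real N)"
    using sum_squared_le_sum_of_squares[of "\<lambda>c. norm (v c)" "{..<N}"] by (intro mult_left_mono) auto
  also have "\<dots> = (1 / real N) * (\<Sum>c<N. (norm (v c))\<^sup>2)" using N by (simp add: power2_eq_square)
  finally show ?thesis .
qed

context fl2 begin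

definition "RdA s m = {(c, s, h) | c h. c < m \<and> 1 \<le> h \<and> h \<le> H s}"

lemma RdA_sub: "m \<le> N \<Longrightarrow> 1 \<le> s \<Longrightarrow> RdA s m \<subseteq> Idx"
  by (auto simp: RdA_def Idx_def)

lemma Ag_RdA: "c < m \<Longrightarrow> Ag c s (H s) \<subseteq> RdA s m"
  by (auto simp: RdA_def Ag_def)

lemma sumu_props:
  assumes s: "1 \<le> s" and m: "m \<le> N"
  shows "depv (RdA s m) (\<lambda>\<omega>. \<Sum>c<m. uu c s (H s) \<omega>) \<and> (\<forall>i. expectation (\<lambda>\<omega>. (\<Sum>c<m. uu c s (H s) \<omega>) $ i) = 0) \<and>
    expectation (\<lambda>\<omega>. (norm (\<Sum>c<m. uu c s (H s) \<omega>))\<^sup>2) = (\<Sum>c<m. expectation (\<lambda>\<omega>. (norm (uu c s (H s) \<omega>))\<^sup>2))"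
  using m
proof (induction m)
  case 0
  then show ?case using RdA_sub[of 0 s] s by (simp add: depv_const)
next
  case (Suc m)
  let ?X = "\<lambda>\<omega>. \<Sum>c<m. uu c s (H s) \<omega>"
  let ?Y = "uu m s (H s)"
  have IH: "depv (RdA s m) ?X" "\<And>i. expectation (\<lambda>\<omega>. ?X \<omega> $ i) = 0"
    "expectation (\<lambda>\<omega>. (norm (?X \<omega>))\<^sup>2) = (\<Sum>c<m. expectation (\<lambda>\<omega>. (norm (uu c s (H s) \<omega>))\<^sup>2))"
    using Suc by auto
  have mN: "m < N" using Suc by simp
  have Y: "depv (Ag m s (H s)) ?Y" "\<And>i. expectation (\<lambda>\<omega>. ?Y \<omega> $ i) = 0"
    using uu_props[OF mN s order.refl] by auto
  have JI: "RdA s (Suc m) \<subseteq> Idx" using RdA_sub[OF Suc(2) s] .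
  have dX: "depv (RdA s (Suc m)) ?X" by (rule depv_mono[OF IH(1) _ JI]) (auto simp: RdA_def)
  have dY: "depv (RdA s (Suc m)) ?Y" by (rule depv_mono[OF Y(1) Ag_RdA JI]) simp
  have disj: "RdA s m \<inter> Ag m s (H s) = {}" by (auto simp: RdA_def Ag_def)
  have eq: "(\<lambda>\<omega>. \<Sum>c<Suc m. uu c s (H s) \<omega>) = (\<lambda>\<omega>. ?X \<omega> + ?Y \<omega>)" by simp
  have d: "depv (RdA s (Suc m)) (\<lambda>\<omega>. \<Sum>c<Suc m. uu c s (H s) \<omega>)" unfolding eq by (rule depv_add[OF dX dY])
  have mm: "expectation (\<lambda>\<omega>. (\<Sum>c<Suc m. uu c s (H s) \<omega>) $ i) = 0" for i
  proof -
    have "integrable M (\<lambda>\<omega>. ?X \<omega> $ i)" "integrable M (\<lambda>\<omega>. ?Y \<omega> $ i)"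
      using dep_int dX dY unfolding depv_def by blast+
    then show ?thesis unfolding eq using IH(2) Y(2) by simp
  qed
  have "expectation (\<lambda>\<omega>. (norm (\<Sum>c<Suc m. uu c s (H s) \<omega>))\<^sup>2)
      = expectation (\<lambda>\<omega>. (norm (?X \<omega>))\<^sup>2) + expectation (\<lambda>\<omega>. (norm (?Y \<omega>))\<^sup>2)"
    using E_add_sq[OF dX dY] E_orth[OF IH(1) IH(2) Y(1) disj] by simp
  then have "expectation (\<lambda>\<omega>. (norm (\<Sum>c<Suc m. uu c s (H s) \<omega>))\<^sup>2)
      = (\<Sum>c<Suc m. expectation (\<lambda>\<omega>. (norm (uu c s (H s) \<omega>))\<^sup>2))" using IH(3) by simp
  then show ?case using d mm by blast
qed

lemma phi_eq: "phiavg N \<pi> A b \<theta>s (Zw \<omega>) \<eta> H s = - ((\<eta> s / real N) *\<^sub>R (\<Sum>c<N. uu c s (H s) \<omega>))"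
proof -
  have "(\<Sum>h = 1..H s. \<eta> s *\<^sub>R (GG \<omega> c s (h + 1) (H s) *v ep c (Zw \<omega> c s h))) = \<eta> s *\<^sub>R uu c s (H s) \<omega>" for c
    by (simp add: uu_def scaleR_sum_right Zw_apply)
  then show ?thesis by (simp add: phiavg_def scaleR_sum_right)
qed

lemma Gavg_eq: "Gavg N A (Zw \<omega>) \<eta> H s = (1 / real N) *\<^sub>R (\<Sum>c<N. GG \<omega> c s 1 (H s))"
  by (simp add: Gavg_def)

lemma sigma_eq: "sigma_bar_sq N \<pi> A b \<theta>s = (1 / real N) * (\<Sum>c<N. mtrace (Sigma_eps \<pi> A b \<theta>s c))"
  by (simp add: sigma_bar_sq_def)

end

lemma q_exp: fixes x :: real assumes "0 \<le> x" "x \<le> 1"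
  shows "((1 - x)\<^sup>2) ^ n \<le> exp (- 2 * (x * real n))"
proof -
  have "1 - x \<le> exp (- x)" using exp_ge_add_one_self[of "-x"] by simp
  then have "(1 - x)\<^sup>2 \<le> (exp (- x))\<^sup>2" by (rule power_mono) (use assms in simp)
  also have "\<dots> = exp (- 2 * x)" by (simp flip: exp_of_nat_mult)
  finally have "((1 - x)\<^sup>2) ^ n \<le> (exp (- 2 * x)) ^ n" by (rule power_mono) simp
  also have "\<dots> = exp (- 2 * (x * real n))" by (simp flip: exp_of_nat_mult add: mult_ac)
  finally show ?thesis .
qed

context fl2 begin

lemma phi_props:
  assumes s: "1 \<le> s"
  shows "depv (RdA s N) (\<lambda>\<omega>. phiavg N \<pi> A b \<theta>s (Zw \<omega>) \<eta> H s) \<and>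
    (\<forall>i. expectation (\<lambda>\<omega>. phiavg N \<pi> A b \<theta>s (Zw \<omega>) \<eta> H s $ i) = 0) \<and>
    expectation (\<lambda>\<omega>. (norm (phiavg N \<pi> A b \<theta>s (Zw \<omega>) \<eta> H s))\<^sup>2)
      \<le> min (real (H s) * (\<eta> s)\<^sup>2) (\<eta> s / a) * sigma_bar_sq N \<pi> A b \<theta>s / real N"
proof -
  let ?S = "\<lambda>\<omega>. \<Sum>c<N. uu c s (H s) \<omega>"
  let ?k = "\<eta> s / real N"
  have S: "depv (RdA s N) ?S" "\<And>i. expectation (\<lambda>\<omega>. ?S \<omega> $ i) = 0"
    "expectation (\<lambda>\<omega>. (norm (?S \<omega>))\<^sup>2) = (\<Sum>c<N. expectation (\<lambda>\<omega>. (norm (uu c s (H s) \<omega>))\<^sup>2))"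
    using sumu_props[OF s order.refl] by auto
  have d: "depv (RdA s N) (\<lambda>\<omega>. phiavg N \<pi> A b \<theta>s (Zw \<omega>) \<eta> H s)"
    unfolding phi_eq by (intro depv_neg depv_scaleR S(1))
  have m: "expectation (\<lambda>\<omega>. phiavg N \<pi> A b \<theta>s (Zw \<omega>) \<eta> H s $ i) = 0" for i
    unfolding phi_eq using S(2)[of i] by simp
  let ?L = "min (real (H s)) (1 / (\<eta> s * a))"
  have u: "expectation (\<lambda>\<omega>. (norm (uu c s (H s) \<omega>))\<^sup>2) \<le> ?L * mtrace (Sigma_eps \<pi> A b \<theta>s c)" if "c < N" for c
    using uu_props[OF that s order.refl] by auto
  have "expectation (\<lambda>\<omega>. (norm (phiavg N \<pi> A b \<theta>s (Zw \<omega>) \<eta> H s))\<^sup>2)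
      = ?k\<^sup>2 * expectation (\<lambda>\<omega>. (norm (?S \<omega>))\<^sup>2)"
  proof -
    have pw: "(norm (- (?k *\<^sub>R ?S \<omega>)))\<^sup>2 = ?k\<^sup>2 * (norm (?S \<omega>))\<^sup>2" for \<omega>
      by (simp only: norm_minus_cancel norm_scaleR power_mult_distrib power2_abs)
    show ?thesis unfolding phi_eq pw by simp
  qed
  also have "\<dots> \<le> ?k\<^sup>2 * (\<Sum>c<N. ?L * mtrace (Sigma_eps \<pi> A b \<theta>s c))"
    unfolding S(3) by (intro mult_left_mono sum_mono u) auto
  also have "\<dots> = ?k\<^sup>2 * (?L * (\<Sum>c<N. mtrace (Sigma_eps \<pi> A b \<theta>s c)))"
    by (simp add: sum_distrib_left)
  also have "\<dots> = ((\<eta> s)\<^sup>2 * ?L) * ((1 / real N) * (\<Sum>c<N. mtrace (Sigma_eps \<pi> A b \<theta>s c))) / real N"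
    using N by (simp add: power2_eq_square field_simps)
  also have "(\<eta> s)\<^sup>2 * ?L = min (real (H s) * (\<eta> s)\<^sup>2) (\<eta> s / a)"
    using eta_pos[of s] a_pos by (simp add: min_mult_distrib_left power2_eq_square field_simps mult_ac)
  finally show ?thesis using d m by (simp add: sigma_eq)
qed

lemma E_G_contr:
  assumes X: "depv J X" and s: "1 \<le> s" and disj: "J \<inter> RdA s N = {}"
  shows "expectation (\<lambda>\<omega>. (norm (Gavg N A (Zw \<omega>) \<eta> H s *v X \<omega>))\<^sup>2)
      \<le> ((1 - \<eta> s * a)\<^sup>2) ^ H s * expectation (\<lambda>\<omega>. (norm (X \<omega>))\<^sup>2)"
proof -
  let ?q = "((1 - \<eta> s * a)\<^sup>2) ^ H s"
  have JI: "J \<subseteq> Idx" using depv_Idx[OF X] .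
  have eq: "Gavg N A (Zw \<omega>) \<eta> H s *v X \<omega> = (1 / real N) *\<^sub>R (\<Sum>c<N. GG \<omega> c s 1 (H s) *v X \<omega>)" for \<omega>
    unfolding Gavg_eq by (simp add: scaleR_matrix_vector_assoc[symmetric] mv_sum_left)
  have dc: "depv (J \<union> Ag c s (H s)) (\<lambda>\<omega>. GG \<omega> c s 1 (H s) *v X \<omega>)" if c: "c < N" for c
  proof -
    have U: "J \<union> Ag c s (H s) \<subseteq> Idx" using JI Ag_sub[OF c s order.refl] by auto
    show ?thesis
      by (intro depv_mv depm_Gam U depv_mono[OF X]) (auto simp: Ag_def)
  qed
  have ic: "integrable M (\<lambda>\<omega>. (norm (GG \<omega> c s 1 (H s) *v X \<omega>))\<^sup>2)" if "c < N" for c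
    using dep_int[OF dep_normsq[OF dc[OF that]]] .
  have dG: "depv (J \<union> RdA s N) (\<lambda>\<omega>. Gavg N A (Zw \<omega>) \<eta> H s *v X \<omega>)"
  proof -
    have U: "J \<union> RdA s N \<subseteq> Idx" using JI RdA_sub[OF order.refl s] by auto
    have "depv (J \<union> RdA s N) (\<lambda>\<omega>. (1 / real N) *\<^sub>R (\<Sum>c<N. GG \<omega> c s 1 (H s) *v X \<omega>))"
    proof (intro depv_scaleR depv_sum U)
      fix c assume "c \<in> {..<N}"
      then have c: "c < N" by simp
      show "depv (J \<union> RdA s N) (\<lambda>\<omega>. GG \<omega> c s 1 (H s) *v X \<omega>)"
        by (rule depv_mono[OF dc[OF c] _ U]) (use Ag_RdA[OF c, of s] in auto)
    qed simp
    then show ?thesis unfolding eq .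
  qed
  have "expectation (\<lambda>\<omega>. (norm (Gavg N A (Zw \<omega>) \<eta> H s *v X \<omega>))\<^sup>2)
      \<le> expectation (\<lambda>\<omega>. (1 / real N) * (\<Sum>c<N. (norm (GG \<omega> c s 1 (H s) *v X \<omega>))\<^sup>2))"
  proof (rule integral_mono)
    show "integrable M (\<lambda>\<omega>. (norm (Gavg N A (Zw \<omega>) \<eta> H s *v X \<omega>))\<^sup>2)"
      using dep_int[OF dep_normsq[OF dG]] .
    have "integrable M (\<lambda>\<omega>. \<Sum>c<N. (norm (GG \<omega> c s 1 (H s) *v X \<omega>))\<^sup>2)"
      by (rule Bochner_Integration.integrable_sum) (use ic in auto)
    then show "integrable M (\<lambda>\<omega>. (1 / real N) * (\<Sum>c<N. (norm (GG \<omega> c s 1 (H s) *v X \<omega>))\<^sup>2))"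
      by (rule integrable_mult_right)
    fix \<omega>
    show "(norm (Gavg N A (Zw \<omega>) \<eta> H s *v X \<omega>))\<^sup>2 \<le> (1 / real N) * (\<Sum>c<N. (norm (GG \<omega> c s 1 (H s) *v X \<omega>))\<^sup>2)"
      unfolding eq by (rule jensen_avg[OF N])
  qed
  also have "\<dots> = (1 / real N) * (\<Sum>c<N. expectation (\<lambda>\<omega>. (norm (GG \<omega> c s 1 (H s) *v X \<omega>))\<^sup>2))"
    using ic by (simp add: Bochner_Integration.integral_sum)
  also have "\<dots> \<le> (1 / real N) * (\<Sum>c<N. ?q * expectation (\<lambda>\<omega>. (norm (X \<omega>))\<^sup>2))"
  proof (intro mult_left_mono sum_mono)
    fix c assume "c \<in> {..<N}"
    then have c: "c < N" by simp
    have dj: "J \<inter> Ag c s (H s) = {}" using disj Ag_RdA[OF c, of s] by auto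
    show "expectation (\<lambda>\<omega>. (norm (GG \<omega> c s 1 (H s) *v X \<omega>))\<^sup>2) \<le> ?q * expectation (\<lambda>\<omega>. (norm (X \<omega>))\<^sup>2)"
      by (rule E_Gam_contr[OF X c s order.refl dj])
  qed simp
  also have "\<dots> = ?q * expectation (\<lambda>\<omega>. (norm (X \<omega>))\<^sup>2)" using N by simp
  finally show ?thesis .
qed

end

lemma th_0: "theta_fl N \<pi> A b \<theta>s Z \<eta> H 0 = 0"
  by (simp add: theta_fl_def)

lemma th_Suc: "theta_fl N \<pi> A b \<theta>s Z \<eta> H (Suc t)
   = Gavg N A Z \<eta> H (Suc t) *v theta_fl N \<pi> A b \<theta>s Z \<eta> H t + phiavg N \<pi> A b \<theta>s Z \<eta> H (Suc t)"
proof -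
  let ?G = "Gavg N A Z \<eta> H" and ?p = "phiavg N \<pi> A b \<theta>s Z \<eta> H"
  have "theta_fl N \<pi> A b \<theta>s Z \<eta> H (Suc t) = (\<Sum>s=1..t. lprod ?G (s + 1) (Suc t) *v ?p s) + lprod ?G (Suc t + 1) (Suc t) *v ?p (Suc t)"
    by (simp add: theta_fl_def)
  also have "lprod ?G (Suc t + 1) (Suc t) = mat 1" by (simp add: lprod_empty)
  also have "(\<Sum>s=1..t. lprod ?G (s + 1) (Suc t) *v ?p s) = (\<Sum>s=1..t. ?G (Suc t) *v (lprod ?G (s + 1) t *v ?p s))"
    by (intro sum.cong refl) (simp add: lprod_Suc matrix_vector_mul_assoc)
  also have "\<dots> = ?G (Suc t) *v theta_fl N \<pi> A b \<theta>s Z \<eta> H t"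
    by (simp add: theta_fl_def mv_sum)
  finally show ?thesis by simp
qed

context fl2 begin

definition "Past t = {(c, s, h). (c, s, h) \<in> Idx \<and> s \<le> t}"

definition "Bd t = (\<Sum>s=1..t. exp (- 2 * a * (\<Sum>i=s+1..t. \<eta> i * real (H i)))
          * min (real (H s) * (\<eta> s)\<^sup>2) (\<eta> s / a) * sigma_bar_sq N \<pi> A b \<theta>s / real N)"

lemma Bd_Suc: "Bd (Suc t) = exp (- 2 * a * (\<eta> (Suc t) * real (H (Suc t)))) * Bd t
   + min (real (H (Suc t)) * (\<eta> (Suc t))\<^sup>2) (\<eta> (Suc t) / a) * sigma_bar_sq N \<pi> A b \<theta>s / real N"
proof -
  let ?m = "\<lambda>s. min (real (H s) * (\<eta> s)\<^sup>2) (\<eta> s / a) * sigma_bar_sq N \<pi> A b \<theta>s / real N"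
  let ?g = "\<lambda>i. \<eta> i * real (H i)"
  have "Bd (Suc t) = (\<Sum>s=1..t. exp (- 2 * a * (\<Sum>i=s+1..Suc t. ?g i)) * ?m s) + ?m (Suc t)"
    by (simp add: Bd_def mult.assoc)
  also have "(\<Sum>s=1..t. exp (- 2 * a * (\<Sum>i=s+1..Suc t. ?g i)) * ?m s)
     = (\<Sum>s=1..t. exp (- 2 * a * ?g (Suc t)) * (exp (- 2 * a * (\<Sum>i=s+1..t. ?g i)) * ?m s))"
  proof (intro sum.cong refl)
    fix s assume "s \<in> {1..t}"
    then have h: "(\<Sum>i=s+1..Suc t. ?g i) = (\<Sum>i=s+1..t. ?g i) + ?g (Suc t)" by simp
    have "exp (- 2 * a * (\<Sum>i=s+1..Suc t. ?g i)) = exp (- 2 * a * ?g (Suc t)) * exp (- 2 * a * (\<Sum>i=s+1..t. ?g i))"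
      unfolding h exp_add[symmetric] by (simp add: algebra_simps)
    then show "exp (- 2 * a * (\<Sum>i=s+1..Suc t. ?g i)) * ?m s = exp (- 2 * a * ?g (Suc t)) * (exp (- 2 * a * (\<Sum>i=s+1..t. ?g i)) * ?m s)"
      by simp
  qed
  also have "\<dots> = exp (- 2 * a * ?g (Suc t)) * Bd t"
    by (simp add: Bd_def sum_distrib_left mult.assoc)
  finally show ?thesis .
qed

lemma Past_sub: "Past t \<subseteq> Idx" by (auto simp: Past_def)

lemma depm_Gavg: assumes s: "1 \<le> s" shows "depm (RdA s N) (\<lambda>\<omega>. Gavg N A (Zw \<omega>) \<eta> H s)"
  unfolding Gavg_eq
proof (intro depm_scaleR depm_sum RdA_sub[OF order.refl s])
  fix c assume "c \<in> {..<N}"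
  then show "depm (RdA s N) (\<lambda>\<omega>. GG \<omega> c s 1 (H s))"
    by (intro depm_Gam RdA_sub[OF order.refl s]) (auto simp: RdA_def)
qed simp

lemma th_props:
  "depv (Past t) (\<lambda>\<omega>. theta_fl N \<pi> A b \<theta>s (Zw \<omega>) \<eta> H t) \<and>
   (\<forall>i. expectation (\<lambda>\<omega>. theta_fl N \<pi> A b \<theta>s (Zw \<omega>) \<eta> H t $ i) = 0) \<and>
   expectation (\<lambda>\<omega>. (norm (theta_fl N \<pi> A b \<theta>s (Zw \<omega>) \<eta> H t))\<^sup>2) \<le> Bd t"
proof (induction t)
  case 0
  then show ?case by (simp add: th_0 depv_const Past_sub Bd_def)
next
  case (Suc t)
  let ?X = "\<lambda>\<omega>. theta_fl N \<pi> A b \<theta>s (Zw \<omega>) \<eta> H t"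
  let ?G = "\<lambda>\<omega>. Gavg N A (Zw \<omega>) \<eta> H (Suc t)"
  let ?p = "\<lambda>\<omega>. phiavg N \<pi> A b \<theta>s (Zw \<omega>) \<eta> H (Suc t)"
  let ?J = "Past (Suc t)"
  have IH: "depv (Past t) ?X" "\<And>i. expectation (\<lambda>\<omega>. ?X \<omega> $ i) = 0"
    "expectation (\<lambda>\<omega>. (norm (?X \<omega>))\<^sup>2) \<le> Bd t" using Suc by auto
  have s: "1 \<le> Suc t" by simp
  have P: "depv (RdA (Suc t) N) ?p" "\<And>i. expectation (\<lambda>\<omega>. ?p \<omega> $ i) = 0"
    "expectation (\<lambda>\<omega>. (norm (?p \<omega>))\<^sup>2)
      \<le> min (real (H (Suc t)) * (\<eta> (Suc t))\<^sup>2) (\<eta> (Suc t) / a) * sigma_bar_sq N \<pi> A b \<theta>s / real N"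
    using phi_props[OF s] by auto
  have G: "depm (RdA (Suc t) N) ?G" by (rule depm_Gavg[OF s])
  have disj: "Past t \<inter> RdA (Suc t) N = {}" by (auto simp: Past_def RdA_def)
  have RJ: "RdA (Suc t) N \<subseteq> ?J" using RdA_sub[OF order.refl s] by (auto simp: Past_def RdA_def)
  have PJ: "Past t \<subseteq> ?J" by (auto simp: Past_def)
  have dGX: "depv ?J (\<lambda>\<omega>. ?G \<omega> *v ?X \<omega>)"
    by (intro depv_mv depm_mono[OF G RJ Past_sub] depv_mono[OF IH(1) PJ Past_sub])
  have dp: "depv ?J ?p" by (rule depv_mono[OF P(1) RJ Past_sub])
  have eq: "(\<lambda>\<omega>. theta_fl N \<pi> A b \<theta>s (Zw \<omega>) \<eta> H (Suc t)) = (\<lambda>\<omega>. ?G \<omega> *v ?X \<omega> + ?p \<omega>)"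
    by (simp add: th_Suc fun_eq_iff)
  have d: "depv ?J (\<lambda>\<omega>. theta_fl N \<pi> A b \<theta>s (Zw \<omega>) \<eta> H (Suc t))" unfolding eq by (rule depv_add[OF dGX dp])
  have m: "expectation (\<lambda>\<omega>. theta_fl N \<pi> A b \<theta>s (Zw \<omega>) \<eta> H (Suc t) $ i) = 0" for i
  proof -
    have "integrable M (\<lambda>\<omega>. (?G \<omega> *v ?X \<omega>) $ i)" "integrable M (\<lambda>\<omega>. ?p \<omega> $ i)"
      using dep_int dGX dp unfolding depv_def by blast+
    then show ?thesis using E_mean[OF IH(1) IH(2) G disj] P(2) by (simp add: th_Suc)
  qed
  have "0 \<le> expectation (\<lambda>\<omega>. (norm (?X \<omega>))\<^sup>2)" by (rule integral_nonneg_AE) auto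
  then have Bd0: "0 \<le> Bd t" using IH(3) by linarith
  have qe: "((1 - \<eta> (Suc t) * a)\<^sup>2) ^ H (Suc t) \<le> exp (- 2 * a * (\<eta> (Suc t) * real (H (Suc t))))"
    using q_exp[of "\<eta> (Suc t) * a" "H (Suc t)"] eta_a[of "Suc t"] by (simp add: mult_ac)
  have ct: "expectation (\<lambda>\<omega>. (norm (?G \<omega> *v ?X \<omega>))\<^sup>2) \<le> exp (- 2 * a * (\<eta> (Suc t) * real (H (Suc t)))) * Bd t"
  proof -
    have "expectation (\<lambda>\<omega>. (norm (?G \<omega> *v ?X \<omega>))\<^sup>2)
        \<le> ((1 - \<eta> (Suc t) * a)\<^sup>2) ^ H (Suc t) * expectation (\<lambda>\<omega>. (norm (?X \<omega>))\<^sup>2)"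
      by (rule E_G_contr[OF IH(1) s disj])
    also have "\<dots> \<le> ((1 - \<eta> (Suc t) * a)\<^sup>2) ^ H (Suc t) * Bd t"
      by (rule mult_left_mono[OF IH(3)]) simp
    also have "\<dots> \<le> exp (- 2 * a * (\<eta> (Suc t) * real (H (Suc t)))) * Bd t"
      by (rule mult_right_mono[OF qe Bd0])
    finally show ?thesis .
  qed
  have cr: "expectation (\<lambda>\<omega>. (?G \<omega> *v ?X \<omega>) \<bullet> ?p \<omega>) = 0"
    by (rule E_cross[OF IH(1) IH(2) G P(1) disj])
  have "expectation (\<lambda>\<omega>. (norm (theta_fl N \<pi> A b \<theta>s (Zw \<omega>) \<eta> H (Suc t)))\<^sup>2)
      = expectation (\<lambda>\<omega>. (norm (?G \<omega> *v ?X \<omega>))\<^sup>2) + expectation (\<lambda>\<omega>. (norm (?p \<omega>))\<^sup>2)"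
    using E_add_sq[OF dGX dp] cr by (simp add: th_Suc)
  also have "\<dots> \<le> Bd (Suc t)" unfolding Bd_Suc using ct P(3) by linarith
  finally show ?case using d m by blast
qed

end

theorem lemma4:
  fixes N :: nat and S :: "'z measure" and \<pi> :: "nat \<Rightarrow> 'z measure"
    and A :: "nat \<Rightarrow> 'z \<Rightarrow> real^'d::finite^'d" and b :: "nat \<Rightarrow> 'z \<Rightarrow> real^'d"
    and \<theta>s :: "nat \<Rightarrow> real^'d"
    and a eta_inf :: real and \<eta> :: "nat \<Rightarrow> real" and H :: "nat \<Rightarrow> nat"
    and M :: "'w measure" and Zs :: "nat \<Rightarrow> nat \<Rightarrow> nat \<Rightarrow> 'w \<Rightarrow> 'z"
    and t :: nat
  assumes N: "N \<ge> 1"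
    and pi_prob: "\<And>c. c < N \<Longrightarrow> prob_space (\<pi> c)"
    and pi_sets: "\<And>c. c < N \<Longrightarrow> sets (\<pi> c) = sets S"
    and A_meas: "\<And>c. c < N \<Longrightarrow> A c \<in> borel_measurable S"
    and b_meas: "\<And>c. c < N \<Longrightarrow> b c \<in> borel_measurable S"
    and b_int: "\<And>c. c < N \<Longrightarrow> integrable (\<pi> c) (b c)"
    and theta_star: "\<And>c. c < N \<Longrightarrow> Abar \<pi> A c *v \<theta>s c = bbar \<pi> b c"
    \<comment> \<open>Assumption A1(2)\<close>
    and hurw: "\<And>c. c < N \<Longrightarrow> hurwitz (- Abar \<pi> A c)"
    and a_pos: "a > 0" and eta_inf_pos: "eta_inf > 0" and eta_inf_a: "eta_inf * a \<le> 1/2"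
    and A1: "\<And>c e u. c < N \<Longrightarrow> 0 < e \<Longrightarrow> e < eta_inf \<Longrightarrow>
        sqrt (integral\<^sup>L (\<pi> c) (\<lambda>z. (norm ((mat 1 - e *\<^sub>R A c z) *v u))\<^sup>2)) \<le> (1 - e * a) * norm u"
    \<comment> \<open>Assumption A2\<close>
    and M_prob: "prob_space M"
    and Zs_meas: "\<And>c s h. c < N \<Longrightarrow> 1 \<le> s \<Longrightarrow> 1 \<le> h \<Longrightarrow> h \<le> H s \<Longrightarrow> Zs c s h \<in> measurable M S"
    and Zs_distr: "\<And>c s h. c < N \<Longrightarrow> 1 \<le> s \<Longrightarrow> 1 \<le> h \<Longrightarrow> h \<le> H s \<Longrightarrow> distr M S (Zs c s h) = \<pi> c"
    and Zs_indep: "prob_space.indep_vars M (\<lambda>_. S) (\<lambda>(c, s, h). Zs c s h)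
                     {(c, s, h). c < N \<and> 1 \<le> s \<and> 1 \<le> h \<and> h \<le> H s}"
    and eps_bdd: "\<exists>K. \<forall>c<N. \<forall>z\<in>space S. norm (eps \<pi> A b \<theta>s c z) \<le> K"
    and A_bdd: "\<exists>K. \<forall>c<N. \<forall>z\<in>space S. norm (A c z) \<le> K \<and> norm (A c z - Abar \<pi> A c) \<le> K"
    \<comment> \<open>step sizes and local step numbers\<close>
    and H_pos: "\<And>s. H s \<ge> 1"
    and eta_pos: "\<And>s. 0 < \<eta> s" and eta_le: "\<And>s. \<eta> s \<le> eta_inf"
    and t: "t \<ge> 1"
  shows "integral\<^sup>L M (\<lambda>\<omega>. (norm (theta_fl N \<pi> A b \<theta>s (\<lambda>c s h. Zs c s h \<omega>) \<eta> H t))\<^sup>2)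
    \<le> (\<Sum>s=1..t. exp (- 2 * a * (\<Sum>i=s+1..t. \<eta> i * real (H i)))
          * min (real (H s) * (\<eta> s)\<^sup>2) (\<eta> s / a) * sigma_bar_sq N \<pi> A b \<theta>s / real N)"
proof -
  interpret F: fl2 M N S Zs H \<pi> A b \<theta>s a eta_inf \<eta>
    by (intro fl2.intro fl.intro fl_axioms.intro fl2_axioms.intro) (fact assms)+
  have "F.expectation (\<lambda>\<omega>. (norm (theta_fl N \<pi> A b \<theta>s (F.Zw \<omega>) \<eta> H t))\<^sup>2) \<le> F.Bd t"
    using F.th_props[of t] by blast
  then show ?thesis by (simp add: F.Bd_def F.Zw_def)
qed

end
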